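(* Let $n\geq 4$ and let $\nu: B_n\to GL_{n+1}(\mathbb{C})$ be a non-trivial homogeneous $3$-local representation of $B_n$. Then any homogeneous $3$-local extension $\nu':SM_n\to M_{n+1}(\mathbb{C})$ of $\nu$ to $SM_n$ is equivalent to one of the representations $\nu'_j$, $1\leq j\leq 8$, given for all $1\le i\le n-1$ by $\nu'_j(\sigma_i)=\mathrm{diag}(I_{i-1},M_j,I_{n-i-1})$ and $\nu'_j(\tau_i)=\mathrm{diag}(I_{i-1},N_j,I_{n-i-1})$, where (all entries complex): (1) $M_1=\begin{pmatrix} 1&0&0\\ 0&m_{22}&m_{23}\\ 0&\frac{1-m_{22}}{m_{23}}&0\end{pmatrix}$ with $m_{22}\neq1$, $m_{23}\neq0$, and (a) $N_1=\begin{pmatrix} 1&0&0\\ 0&n_{22}&m_{23}^2n_{32}\\ 0&n_{32}&n_{22}\end{pmatrix}$ if $m_{22}=0$; (b) $N_1=\begin{pmatrix} 1&0&0\\ 0&1-m_{23}n_{32}&\frac{-m_{23}^2n_{32}}{m_{22}-1}\\ 0&n_{32}&\frac{-1+m_{22}+m_{23}n_{32}}{m_{22}-1}\end{pmatrix}$ otherwise. (2) $M_2=\begin{pmatrix} 0&m_{12}&0\\ \frac{1-m_{22}}{m_{12}}&m_{22}&0\\ 0&0&1\end{pmatrix}$ with $m_{22}\neq1$, $m_{12}\neq0$, and (a) $N_2=\begin{pmatrix} n_{11}&m_{12}^2n_{21}&0\\ n_{21}&n_{11}&0\\ 0&0&1\end{pmatrix}$ if $m_{22}=0$; (b) $N_2=\begin{pmatrix}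 \frac{m_{12}n_{21}+m_{22}-1}{m_{22}-1}&-\frac{m_{12}^2n_{21}}{m_{22}-1}&0\\ n_{21}&1-m_{12}n_{21}&0\\ 0&0&1\end{pmatrix}$ otherwise. (3) $M_3=\begin{pmatrix} 1&\frac{-m_{22}}{m_{32}}&0\\ 0&m_{22}&0\\ 0&m_{32}&1\end{pmatrix}$ with $m_{22}m_{32}\neq0$, and $N_3=\begin{pmatrix} 1&n_{12}&0\\ 0&1-m_{32}n_{12}+\frac{m_{32}n_{12}}{m_{22}}&0\\ 0&-\frac{m_{32}^2n_{12}}{m_{22}}&1\end{pmatrix}$. (4) $M_4=\begin{pmatrix} 1&0&0\\ -\frac{m_{22}}{m_{23}}&m_{22}&m_{23}\\ 0&0&1\end{pmatrix}$ with $m_{23}m_{22}\neq0$, and $N_4=\begin{pmatrix} 1&0&0\\ n_{21}&1-m_{23}n_{21}+\frac{m_{23}n_{21}}{m_{22}}&-\frac{m_{23}^2n_{21}}{m_{22}}\\ 0&0&1\end{pmatrix}$. (5) $M_5=\begin{pmatrix} 1&0&0\\ 0&0&m_{23}\\ 0&m_{32}&1-m_{23}m_{32}\end{pmatrix}$ with $m_{23}m_{32}\neq0$, and (a) $N_5=\begin{pmatrix} 1&0&0\\ 0&n_{22}&n_{23}\\ 0&\frac{n_{23}}{m_{23}^2}&n_{22}\end{pmatrix}$ if $m_{32}m_{23}=1$; (b) $N_5=\begin{pmatrix} 1&0&0\\ 0&n_{22}&m_{23}-m_{23}n_{22}\\ 0&m_{32}-m_{32}n_{22}&m_{23}m_{32}(n_{22}-1)+1\end{pmatrix}$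 otherwise. (6) $M_6=\begin{pmatrix} 1-m_{12}m_{21}&m_{12}&0\\ m_{21}&0&0\\ 0&0&1\end{pmatrix}$ with $m_{12}m_{21}\neq0$, and (a) $N_6=\begin{pmatrix} n_{11}&n_{12}&0\\ \frac{n_{12}}{m_{12}^2}&n_{11}&0\\ 0&0&1\end{pmatrix}$ if $m_{12}m_{21}=1$; (b) $N_6=\begin{pmatrix} m_{12}m_{21}(n_{22}-1)+1&m_{12}-m_{12}n_{22}&0\\ m_{21}-m_{21}n_{22}&n_{22}&0\\ 0&0&1\end{pmatrix}$ otherwise. (7) $M_7=\begin{pmatrix} 1&0&0\\ 0&0&m_{23}\\ 0&m_{32}&0\end{pmatrix}$ with $m_{23}m_{32}\neq0$, and $N_7=\begin{pmatrix} 1&0&0\\ 0&n_{22}&n_{23}\\ 0&\frac{m_{32}n_{23}}{m_{23}}&n_{22}\end{pmatrix}$. (8) $M_8=\begin{pmatrix} 0&m_{12}&0\\ m_{21}&0&0\\ 0&0&1\end{pmatrix}$ with $m_{12}m_{21}\neq0$, and $N_8=\begin{pmatrix} n_{11}&n_{12}&0\\ \frac{m_{21}n_{12}}{m_{12}}&n_{11}&0\\ 0&0&1\end{pmatrix}$. Moreover, if $\nu'(\tau_i)$ is invertible for all $1\leq i\leq n-1$, then $\nu'$ is a representation of the singular braid group $SB_n$.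
   Context: The braid group $B_n$ has generators $\sigma_1,\dots,\sigma_{n-1}$ with relations $\sigma_i\sigma_{i+1}\sigma_i=\sigma_{i+1}\sigma_i\sigma_{i+1}$ ($1\le i\le n-2$) and $\sigma_i\sigma_j=\sigma_j\sigma_i$ ($|i-j|\ge2$). The singular braid monoid $SM_n$ is the monoid generated by $\sigma_1^{\pm1},\dots,\sigma_{n-1}^{\pm1},\tau_1,\dots,\tau_{n-1}$ subject to $\sigma_i\sigma_i^{-1}=\sigma_i^{-1}\sigma_i=1$, the braid relations above, and $\tau_i\tau_j=\tau_j\tau_i$, $\tau_i\sigma_j=\sigma_j\tau_i$ for $|i-j|\ge 2$, $\tau_i\sigma_i=\sigma_i\tau_i$ for $1\le i\le n-1$, and $\sigma_i\sigma_{i+1}\tau_i=\tau_{i+1}\sigma_i\sigma_{i+1}$, $\sigma_{i+1}\sigma_i\tau_{i+1}=\tau_i\sigma_{i+1}\sigma_i$ for $1\le i\le n-2$. The singular braid group $SB_n$ is the group with generators $\sigma_i,\tau_i$ and the same relations (into which $SM_n$ embeds). A representation of $SM_n$ is a monoid homomorphism into $M_{n+1}(\mathbb{C})$. A representation $\nu:B_n\to GL_{n+1}(\mathbb{C})$ is homogeneous $3$-local if there is $M\in M_3(\mathbb{C})$ with $\nu(\sigma_i)=\mathrm{diag}(I_{i-1},M,I_{n-i-1})$ for all $1\le i\le n-1$; "non-trivial" means not sending every $\sigma_i$ to the identity. A homogeneous $3$-local extension of $\nu$ to $SM_n$ is a representation $\nu':SM_n\to M_{n+1}(\mathbb{C})$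 with $\nu'(\sigma_i)=\nu(\sigma_i)$ and $\nu'(\tau_i)=\mathrm{diag}(I_{i-1},N,I_{n-i-1})$ for all $i$, for a single $N\in M_3(\mathbb{C})$. Two representations are equivalent if they are conjugate by a fixed invertible matrix. *)

theory Defs
  imports "Jordan_Normal_Form.Matrix"
begin

text \<open>Generators: Sg i = sigma_i, SgI i = sigma_i^-1, Tg i = tau_i, TgI i = tau_i^-1.
  Words over generators are lists; a word evaluates to the product of its letters.\<close>
datatype gen = Sg nat | SgI nat | Tg nat | TgI nat

definition idx :: "nat \<Rightarrow> nat set" where
  "idx n = {1..n-1}"

definition gens_B :: "nat \<Rightarrow> gen set" where
  "gens_B n = {Sg i | i. i \<in> idx n} \<union> {SgI i | i. i \<in> idx n}"

definition gens_SM :: "nat \<Rightarrow> gen set" where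
  "gens_SM n = gens_B n \<union> {Tg i | i. i \<in> idx n}"

definition gens_SB :: "nat \<Rightarrow> gen set" where
  "gens_SB n = gens_SM n \<union> {TgI i | i. i \<in> idx n}"

definition braid_rels :: "nat \<Rightarrow> (gen list \<times> gen list) set" where
  "braid_rels n =
     {([Sg i, SgI i], []) | i. i \<in> idx n} \<union> {([SgI i, Sg i], []) | i. i \<in> idx n}
   \<union> {([Sg i, Sg (i+1), Sg i], [Sg (i+1), Sg i, Sg (i+1)]) | i. 1 \<le> i \<and> i \<le> n - 2}
   \<union> {([Sg i, Sg j], [Sg j, Sg i]) | i j. i \<in> idx n \<and> j \<in> idx n \<and> (i + 2 \<le> j \<or> j + 2 \<le> i)}"

definition sm_rels :: "nat \<Rightarrow> (gen list \<times> gen list) set" where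
  "sm_rels n = braid_rels n
   \<union> {([Tg i, Tg j], [Tg j, Tg i]) | i j. i \<in> idx n \<and> j \<in> idx n \<and> (i + 2 \<le> j \<or> j + 2 \<le> i)}
   \<union> {([Tg i, Sg j], [Sg j, Tg i]) | i j. i \<in> idx n \<and> j \<in> idx n \<and> (i + 2 \<le> j \<or> j + 2 \<le> i)}
   \<union> {([Tg i, Sg i], [Sg i, Tg i]) | i. i \<in> idx n}
   \<union> {([Sg i, Sg (i+1), Tg i], [Tg (i+1), Sg i, Sg (i+1)]) | i. 1 \<le> i \<and> i \<le> n - 2}
   \<union> {([Sg (i+1), Sg i, Tg (i+1)], [Tg i, Sg (i+1), Sg i]) | i. 1 \<le> i \<and> i \<le> n - 2}"

definition sb_rels :: "nat \<Rightarrow> (gen list \<times> gen list) set" where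
  "sb_rels n = sm_rels n
   \<union> {([Tg i, TgI i], []) | i. i \<in> idx n} \<union> {([TgI i, Tg i], []) | i. i \<in> idx n}"

text \<open>A representation (monoid homomorphism into d x d complex matrices) of the monoid
  presented by generators A and relations R, given as a map on words over A:
  multiplicative, unital, and respecting every defining relation (equivalently, it
  factors through the quotient of the free monoid by the congruence generated by R).\<close>
definition is_pres_rep ::
  "gen set \<Rightarrow> (gen list \<times> gen list) set \<Rightarrow> nat \<Rightarrow> (gen list \<Rightarrow> complex mat) \<Rightarrow> bool" where
  "is_pres_rep A R d \<rho> \<longleftrightarrow>
     (\<forall>w \<in> lists A. \<rho> w \<in> carrier_mat d d) \<and>
     \<rho> [] = 1\<^sub>m d \<and>
     (\<forall>u \<in> lists A. \<forall>v \<in> lists A. \<rho> (u @ v) = \<rho> u * \<rho> v) \<and>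
     (\<forall>(u, v) \<in> R. \<rho> u = \<rho> v)"

text \<open>diag(I_{i-1}, M, I_{n-i-1}) as an (n+1) x (n+1) matrix (0-based rows i-1, i, i+1).\<close>
definition local3 :: "nat \<Rightarrow> nat \<Rightarrow> complex mat \<Rightarrow> complex mat" where
  "local3 n i M = mat (n+1) (n+1) (\<lambda>(r, c).
      if i - 1 \<le> r \<and> r < i + 2 \<and> i - 1 \<le> c \<and> c < i + 2
      then M $$ (r - (i - 1), c - (i - 1))
      else if r = c then 1 else 0)"

definition mat3 :: "complex \<Rightarrow> complex \<Rightarrow> complex \<Rightarrow> complex \<Rightarrow> complex \<Rightarrow> complex
   \<Rightarrow> complex \<Rightarrow> complex \<Rightarrow> complex \<Rightarrow> complex mat" where
  "mat3 a b c d e f g h k = mat_of_rows_list 3 [[a, b, c], [d, e, f], [g, h, k]]"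

definition family :: "nat \<Rightarrow> complex mat \<Rightarrow> complex mat \<Rightarrow> bool" where
  "family j M N \<longleftrightarrow>
   (j = 1 \<and> (\<exists>m22 m23 n22 n32. m22 \<noteq> 1 \<and> m23 \<noteq> 0 \<and>
      M = mat3 1 0 0  0 m22 m23  0 ((1 - m22) / m23) 0 \<and>
      (if m22 = 0 then N = mat3 1 0 0  0 n22 (m23^2 * n32)  0 n32 n22
       else N = mat3 1 0 0  0 (1 - m23 * n32) (- (m23^2 * n32) / (m22 - 1))
                     0 n32 ((-1 + m22 + m23 * n32) / (m22 - 1))))) \<or>
   (j = 2 \<and> (\<exists>m22 m12 n11 n21. m22 \<noteq> 1 \<and> m12 \<noteq> 0 \<and>
      M = mat3 0 m12 0  ((1 - m22) / m12) m22 0  0 0 1 \<and>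
      (if m22 = 0 then N = mat3 n11 (m12^2 * n21) 0  n21 n11 0  0 0 1
       else N = mat3 ((m12 * n21 + m22 - 1) / (m22 - 1)) (- (m12^2 * n21) / (m22 - 1)) 0
                     n21 (1 - m12 * n21) 0  0 0 1))) \<or>
   (j = 3 \<and> (\<exists>m22 m32 n12. m22 * m32 \<noteq> 0 \<and>
      M = mat3 1 (- m22 / m32) 0  0 m22 0  0 m32 1 \<and>
      N = mat3 1 n12 0  0 (1 - m32 * n12 + m32 * n12 / m22) 0  0 (- (m32^2 * n12) / m22) 1)) \<or>
   (j = 4 \<and> (\<exists>m22 m23 n21. m23 * m22 \<noteq> 0 \<and>
      M = mat3 1 0 0  (- m22 / m23) m22 m23  0 0 1 \<and>
      N = mat3 1 0 0  n21 (1 - m23 * n21 + m23 * n21 / m22) (- (m23^2 * n21) / m22)  0 0 1)) \<or>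
   (j = 5 \<and> (\<exists>m23 m32 n22 n23. m23 * m32 \<noteq> 0 \<and>
      M = mat3 1 0 0  0 0 m23  0 m32 (1 - m23 * m32) \<and>
      (if m32 * m23 = 1 then N = mat3 1 0 0  0 n22 n23  0 (n23 / m23^2) n22
       else N = mat3 1 0 0  0 n22 (m23 - m23 * n22)  0 (m32 - m32 * n22) (m23 * m32 * (n22 - 1) + 1)))) \<or>
   (j = 6 \<and> (\<exists>m12 m21 n11 n12 n22. m12 * m21 \<noteq> 0 \<and>
      M = mat3 (1 - m12 * m21) m12 0  m21 0 0  0 0 1 \<and>
      (if m12 * m21 = 1 then N = mat3 n11 n12 0  (n12 / m12^2) n11 0  0 0 1
       else N = mat3 (m12 * m21 * (n22 - 1) + 1) (m12 - m12 * n22) 0  (m21 - m21 * n22) n22 0  0 0 1))) \<or>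
   (j = 7 \<and> (\<exists>m23 m32 n22 n23. m23 * m32 \<noteq> 0 \<and>
      M = mat3 1 0 0  0 0 m23  0 m32 0 \<and>
      N = mat3 1 0 0  0 n22 n23  0 (m32 * n23 / m23) n22)) \<or>
   (j = 8 \<and> (\<exists>m12 m21 n11 n12. m12 * m21 \<noteq> 0 \<and>
      M = mat3 0 m12 0  m21 0 0  0 0 1 \<and>
      N = mat3 n11 n12 0  (m21 * n12 / m12) n11 0  0 0 1))"

definition equiv_to_local ::
  "nat \<Rightarrow> (gen list \<Rightarrow> complex mat) \<Rightarrow> complex mat \<Rightarrow> complex mat \<Rightarrow> bool" where
  "equiv_to_local n \<rho> M N \<longleftrightarrow>
     (\<exists>P Q. P \<in> carrier_mat (n+1) (n+1) \<and> Q \<in> carrier_mat (n+1) (n+1) \<and>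
        P * Q = 1\<^sub>m (n+1) \<and> Q * P = 1\<^sub>m (n+1) \<and>
        (\<forall>i \<in> idx n. \<rho> [Sg i] = P * local3 n i M * Q \<and> \<rho> [Tg i] = P * local3 n i N * Q))"

end

theory Submission
  imports Defs
begin

definition emb :: "nat \<Rightarrow> complex mat \<Rightarrow> complex mat" where
  "emb n L = four_block_mat L (0\<^sub>m 5 (n-4)) (0\<^sub>m (n-4) 5) (1\<^sub>m (n-4))"

lemma local3_carrier[simp]: "local3 n i X \<in> carrier_mat (n+1) (n+1)"
  by (simp add: local3_def)

lemma local3_4_carrier[simp]: "local3 4 i X \<in> carrier_mat 5 5"
  by (simp add: local3_def)

lemma local3_emb:
  assumes n: "4 \<le> n" and i: "1 \<le> i" "i \<le> 3"
  shows "local3 n i X = emb n (local3 4 i X)"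
proof (rule eq_matI)
  show "dim_row (local3 n i X) = dim_row (emb n (local3 4 i X))"
    using n by (simp add: emb_def local3_def)
  show "dim_col (local3 n i X) = dim_col (emb n (local3 4 i X))"
    using n by (simp add: emb_def local3_def)
  fix r c assume r: "r < dim_row (emb n (local3 4 i X))" and c: "c < dim_col (emb n (local3 4 i X))"
  have r': "r < n + 1" and c': "c < n + 1" using r c n by (auto simp: emb_def local3_def)
  show "local3 n i X $$ (r, c) = emb n (local3 4 i X) $$ (r, c)"
    using r' c' n i by (auto simp: emb_def local3_def)
qed

lemma emb_mult:
  assumes A: "A \<in> carrier_mat 5 5" and B: "B \<in> carrier_mat 5 5"
  shows "emb n A * emb n B = emb n (A * B)"
proof -
  have "emb n A * emb n B = four_block_mat (A * B + 0\<^sub>m 5 (n-4) * 0\<^sub>m (n-4) 5)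
      (A * 0\<^sub>m 5 (n-4) + 0\<^sub>m 5 (n-4) * 1\<^sub>m (n-4))
      (0\<^sub>m (n-4) 5 * B + 1\<^sub>m (n-4) * 0\<^sub>m (n-4) 5)
      (0\<^sub>m (n-4) 5 * 0\<^sub>m 5 (n-4) + 1\<^sub>m (n-4) * 1\<^sub>m (n-4))"
    unfolding emb_def
    by (rule mult_four_block_mat[OF A _ _ _ B], auto)
  also have "\<dots> = emb n (A * B)"
    unfolding emb_def using A B by (simp)
  finally show ?thesis .
qed

lemma emb_inj:
  assumes A: "A \<in> carrier_mat 5 5" and B: "B \<in> carrier_mat 5 5" and eq: "emb n A = emb n B"
  shows "A = B"
proof (rule eq_matI)
  fix i j assume "i < dim_row B" "j < dim_col B"
  hence ij: "i < 5" "j < 5" using B by auto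
  have "emb n A $$ (i,j) = emb n B $$ (i,j)" using eq by simp
  thus "A $$ (i,j) = B $$ (i,j)" using ij A B by (simp add: emb_def)
qed (use A B in auto)

lemma mat3_eq: assumes "M \<in> carrier_mat 3 3"
  shows "M = mat3 (M$$(0,0)) (M$$(0,1)) (M$$(0,2)) (M$$(1,0)) (M$$(1,1)) (M$$(1,2)) (M$$(2,0)) (M$$(2,1)) (M$$(2,2))"
proof (rule eq_matI)
  fix i j assume "i < dim_row (mat3 (M$$(0,0)) (M$$(0,1)) (M$$(0,2)) (M$$(1,0)) (M$$(1,1)) (M$$(1,2)) (M$$(2,0)) (M$$(2,1)) (M$$(2,2)))"
     "j < dim_col (mat3 (M$$(0,0)) (M$$(0,1)) (M$$(0,2)) (M$$(1,0)) (M$$(1,1)) (M$$(1,2)) (M$$(2,0)) (M$$(2,1)) (M$$(2,2)))"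
  hence "i < 3" "j < 3" by (auto simp: mat3_def mat_of_rows_list_def)
  hence "i = 0 \<or> i = 1 \<or> i = 2" "j = 0 \<or> j = 1 \<or> j = 2" by auto
  thus "M $$ (i, j) = mat3 (M$$(0,0)) (M$$(0,1)) (M$$(0,2)) (M$$(1,0)) (M$$(1,1)) (M$$(1,2)) (M$$(2,0)) (M$$(2,1)) (M$$(2,2)) $$ (i, j)"
    by (auto simp: mat3_def mat_of_rows_list_def)
qed (use assms in \<open>auto simp: mat3_def mat_of_rows_list_def\<close>)

lemma mat3_one: "mat3 1 0 0 0 1 0 0 0 1 = 1\<^sub>m 3"
proof (rule eq_matI)
  fix i j assume "i < dim_row (1\<^sub>m 3 :: complex mat)" "j < dim_col (1\<^sub>m 3 :: complex mat)"
  hence "i = 0 \<or> i = 1 \<or> i = 2" "j = 0 \<or> j = 1 \<or> j = 2" by auto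
  thus "mat3 1 0 0 0 1 0 0 0 1 $$ (i, j) = 1\<^sub>m 3 $$ (i, j)"
    by (auto simp: mat3_def mat_of_rows_list_def)
qed (auto simp: mat3_def mat_of_rows_list_def)

lemma local3_one: "local3 n i (1\<^sub>m 3) = 1\<^sub>m (n+1)"
  by (rule eq_matI) (auto simp: local3_def)

lemma local3_row_nz:
  assumes inv: "invertible_mat (local3 n 1 X)" and r: "r < 3" and n: "2 \<le> n"
  shows "X$$(r,0) \<noteq> 0 \<or> X$$(r,1) \<noteq> 0 \<or> X$$(r,2) \<noteq> 0"
proof (rule ccontr)
  assume "\<not> ?thesis"
  hence z: "X$$(r,0) = 0" "X$$(r,1) = 0" "X$$(r,2) = 0" by auto
  let ?L = "local3 n 1 X"
  from inv obtain B where i1: "inverts_mat ?L B" and i2: "inverts_mat B ?L" unfolding invertible_mat_def by blast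
  have AB: "?L * B = 1\<^sub>m (n+1)" using i1 unfolding inverts_mat_def by (simp add: local3_def)
  have BA: "B * ?L = 1\<^sub>m (dim_row B)" using i2 unfolding inverts_mat_def by simp
  have dB: "dim_col B = n + 1" "dim_row B = n + 1"
    using arg_cong[OF AB, of dim_col] arg_cong[OF BA, of dim_col] by (auto simp: local3_def)
  have rowz: "row ?L r = 0\<^sub>v (n+1)"
  proof (rule eq_vecI)
    fix k assume "k < dim_vec (0\<^sub>v (n+1) :: complex vec)"
    hence k: "k < n+1" by simp
    have "k = 0 \<or> k = 1 \<or> k = 2 \<or> k \<ge> 3" by auto
    thus "row ?L r $ k = 0\<^sub>v (n+1) $ k" using k r n z by (auto simp: local3_def)
  qed (simp add: local3_def)
  have "(?L * B) $$ (r,r) = row ?L r \<bullet> col B r" using r n dB by (simp add: local3_def)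
  also have "\<dots> = 0" unfolding rowz using col_dim[of B r] dB by simp
  finally have "(?L * B) $$ (r,r) = 0" .
  moreover have "(?L * B) $$ (r,r) = 1" using AB r n by simp
  ultimately show False by simp
qed

lemma local3_col_nz:
  assumes inv: "invertible_mat (local3 n 1 X)" and r: "r < 3" and n: "2 \<le> n"
  shows "X$$(0,r) \<noteq> 0 \<or> X$$(1,r) \<noteq> 0 \<or> X$$(2,r) \<noteq> 0"
proof (rule ccontr)
  assume "\<not> ?thesis"
  hence z: "X$$(0,r) = 0" "X$$(1,r) = 0" "X$$(2,r) = 0" by auto
  let ?L = "local3 n 1 X"
  from inv obtain B where i1: "inverts_mat ?L B" and i2: "inverts_mat B ?L" unfolding invertible_mat_def by blast
  have BA: "?L * B = 1\<^sub>m (n+1)" using i1 unfolding inverts_mat_def by (simp add: local3_def)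
  have AB: "B * ?L = 1\<^sub>m (dim_row B)" using i2 unfolding inverts_mat_def by simp
  have dB: "dim_col B = n + 1" "dim_row B = n + 1"
    using arg_cong[OF BA, of dim_col] arg_cong[OF AB, of dim_col] by (auto simp: local3_def)
  have colz: "col ?L r = 0\<^sub>v (n+1)"
  proof (rule eq_vecI)
    fix k assume "k < dim_vec (0\<^sub>v (n+1) :: complex vec)"
    hence k: "k < n+1" by simp
    have "k = 0 \<or> k = 1 \<or> k = 2 \<or> k \<ge> 3" by auto
    thus "col ?L r $ k = 0\<^sub>v (n+1) $ k" using k r n z by (auto simp: local3_def)
  qed (simp add: local3_def)
  have "(B * ?L) $$ (r,r) = row B r \<bullet> col ?L r" using r n dB by (simp add: local3_def)
  also have "\<dots> = 0" unfolding colz using row_carrier[of B r] dB by simp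
  finally have "(B * ?L) $$ (r,r) = 0" .
  moreover have "(B * ?L) $$ (r,r) = 1" using AB r n dB by simp
  ultimately show False by simp
qed

lemma rel_cm:
  assumes eq: "local3 4 1 A * local3 4 3 A = local3 4 3 A * local3 4 1 A"
    and A: "A = mat3 a b c d e f g h k" and B: "B = mat3 x11 x12 x13 x21 x22 x23 x31 x32 x33"
  shows "a*c - c = 0"
    "b*c = 0"
    "c^2 = 0"
    "a*f - f = 0"
    "b*f = 0"
    "c*f = 0"
    "- (a*g) + g = 0"
    "- (a*h) + h = 0"
    "- (b) + b*k = 0"
    "- (c) + c*k = 0"
    "- (d*g) = 0"
    "- (d*h) = 0"
    "d - d*k = 0"
    "- (g^2) = 0"
    "- (g*h) = 0"
    "g - g*k = 0"
proof -
  have z: "\<And>r s. (local3 4 1 A * local3 4 3 A) $$ (r,s) - (local3 4 3 A * local3 4 1 A) $$ (r,s) = 0" using eq by simp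
  show "a*c - c = 0" by (rule trans[OF _ z[of 0 2]]) (simp add: A B local3_def mat3_def mat_of_rows_list_def scalar_prod_def eval_nat_numeral algebra_simps)
  show "b*c = 0" by (rule trans[OF _ z[of 0 3]]) (simp add: A B local3_def mat3_def mat_of_rows_list_def scalar_prod_def eval_nat_numeral algebra_simps)
  show "c^2 = 0" by (rule trans[OF _ z[of 0 4]]) (simp add: A B local3_def mat3_def mat_of_rows_list_def scalar_prod_def eval_nat_numeral algebra_simps)
  show "a*f - f = 0" by (rule trans[OF _ z[of 1 2]]) (simp add: A B local3_def mat3_def mat_of_rows_list_def scalar_prod_def eval_nat_numeral algebra_simps)
  show "b*f = 0" by (rule trans[OF _ z[of 1 3]]) (simp add: A B local3_def mat3_def mat_of_rows_list_def scalar_prod_def eval_nat_numeral algebra_simps)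
  show "c*f = 0" by (rule trans[OF _ z[of 1 4]]) (simp add: A B local3_def mat3_def mat_of_rows_list_def scalar_prod_def eval_nat_numeral algebra_simps)
  show "- (a*g) + g = 0" by (rule trans[OF _ z[of 2 0]]) (simp add: A B local3_def mat3_def mat_of_rows_list_def scalar_prod_def eval_nat_numeral algebra_simps)
  show "- (a*h) + h = 0" by (rule trans[OF _ z[of 2 1]]) (simp add: A B local3_def mat3_def mat_of_rows_list_def scalar_prod_def eval_nat_numeral algebra_simps)
  show "- (b) + b*k = 0" by (rule trans[OF _ z[of 2 3]]) (simp add: A B local3_def mat3_def mat_of_rows_list_def scalar_prod_def eval_nat_numeral algebra_simps)
  show "- (c) + c*k = 0" by (rule trans[OF _ z[of 2 4]]) (simp add: A B local3_def mat3_def mat_of_rows_list_def scalar_prod_def eval_nat_numeral algebra_simps)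
  show "- (d*g) = 0" by (rule trans[OF _ z[of 3 0]]) (simp add: A B local3_def mat3_def mat_of_rows_list_def scalar_prod_def eval_nat_numeral algebra_simps)
  show "- (d*h) = 0" by (rule trans[OF _ z[of 3 1]]) (simp add: A B local3_def mat3_def mat_of_rows_list_def scalar_prod_def eval_nat_numeral algebra_simps)
  show "d - d*k = 0" by (rule trans[OF _ z[of 3 2]]) (simp add: A B local3_def mat3_def mat_of_rows_list_def scalar_prod_def eval_nat_numeral algebra_simps)
  show "- (g^2) = 0" by (rule trans[OF _ z[of 4 0]]) (simp add: A B local3_def mat3_def mat_of_rows_list_def scalar_prod_def eval_nat_numeral algebra_simps)
  show "- (g*h) = 0" by (rule trans[OF _ z[of 4 1]]) (simp add: A B local3_def mat3_def mat_of_rows_list_def scalar_prod_def eval_nat_numeral algebra_simps)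
  show "g - g*k = 0" by (rule trans[OF _ z[of 4 2]]) (simp add: A B local3_def mat3_def mat_of_rows_list_def scalar_prod_def eval_nat_numeral algebra_simps)
qed

lemma rel_br:
  assumes eq: "local3 4 1 A * (local3 4 2 A * local3 4 1 A) = local3 4 2 A * (local3 4 1 A * local3 4 2 A)"
    and A: "A = mat3 a b c d e f g h k" and B: "B = mat3 x11 x12 x13 x21 x22 x23 x31 x32 x33"
  shows "- (a) + a*b*d + a^2 + b^2*g + c*d^2 + c*e*g = 0"
    "a*b*e + b^2*h - c*d + c*d*e + c*e*h = 0"
    "a*b*f + a*c - b^2 + b^2*k + c*d*f - c*e + c*e*k = 0"
    "a*d*e + b*e*g - b*g + d^2*f + e*f*g = 0"
    "- (a*b*h) - a*d*f + a*e^2 - a^2*e + b*d - b*d*k + b*e*h - c*g + d*e*f + e*f*h = 0"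
    "- (a*b*e) - b^2*h + c*d - c*h + d*f^2 + e*f*k = 0"
    "- (a*c*e) - a*f^2 - b*c*h - b*f*k + c*e - c*k + f^2 = 0"
    "a*d*h + a*g + b*g*h - d^2 + d^2*k - e*g + e*g*k = 0"
    "- (a*d*e) + b*g + b*h^2 - d^2*f + e*h*k - f*g = 0"
    "a*f*h - b*d*e - b*e*h + b*h*k + c*g - d*e*f + d*f*k + e*k^2 - e^2*k - f*h = 0"
    "- (c*d*e) - c*e*h + c*h - d*f^2 - e*f*k = 0"
    "- (a*e*g) - a*h^2 - d*f*g - d*h*k + e*g - g*k + h^2 = 0"
    "- (b*e*g) - b*h^2 - e*f*g - e*h*k + f*g = 0"
    "- (c*e*g) - c*h^2 - f*h*k - f^2*g + k - k^2 = 0"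
proof -
  have z: "\<And>r s. (local3 4 1 A * (local3 4 2 A * local3 4 1 A)) $$ (r,s) - (local3 4 2 A * (local3 4 1 A * local3 4 2 A)) $$ (r,s) = 0" using eq by simp
  show "- (a) + a*b*d + a^2 + b^2*g + c*d^2 + c*e*g = 0" by (rule trans[OF _ z[of 0 0]]) (simp add: A B local3_def mat3_def mat_of_rows_list_def scalar_prod_def eval_nat_numeral algebra_simps)
  show "a*b*e + b^2*h - c*d + c*d*e + c*e*h = 0" by (rule trans[OF _ z[of 0 1]]) (simp add: A B local3_def mat3_def mat_of_rows_list_def scalar_prod_def eval_nat_numeral algebra_simps)
  show "a*b*f + a*c - b^2 + b^2*k + c*d*f - c*e + c*e*k = 0" by (rule trans[OF _ z[of 0 2]]) (simp add: A B local3_def mat3_def mat_of_rows_list_def scalar_prod_def eval_nat_numeral algebra_simps)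
  show "a*d*e + b*e*g - b*g + d^2*f + e*f*g = 0" by (rule trans[OF _ z[of 1 0]]) (simp add: A B local3_def mat3_def mat_of_rows_list_def scalar_prod_def eval_nat_numeral algebra_simps)
  show "- (a*b*h) - a*d*f + a*e^2 - a^2*e + b*d - b*d*k + b*e*h - c*g + d*e*f + e*f*h = 0" by (rule trans[OF _ z[of 1 1]]) (simp add: A B local3_def mat3_def mat_of_rows_list_def scalar_prod_def eval_nat_numeral algebra_simps)
  show "- (a*b*e) - b^2*h + c*d - c*h + d*f^2 + e*f*k = 0" by (rule trans[OF _ z[of 1 2]]) (simp add: A B local3_def mat3_def mat_of_rows_list_def scalar_prod_def eval_nat_numeral algebra_simps)
  show "- (a*c*e) - a*f^2 - b*c*h - b*f*k + c*e - c*k + f^2 = 0" by (rule trans[OF _ z[of 1 3]]) (simp add: A B local3_def mat3_def mat_of_rows_list_def scalar_prod_def eval_nat_numeral algebra_simps)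
  show "a*d*h + a*g + b*g*h - d^2 + d^2*k - e*g + e*g*k = 0" by (rule trans[OF _ z[of 2 0]]) (simp add: A B local3_def mat3_def mat_of_rows_list_def scalar_prod_def eval_nat_numeral algebra_simps)
  show "- (a*d*e) + b*g + b*h^2 - d^2*f + e*h*k - f*g = 0" by (rule trans[OF _ z[of 2 1]]) (simp add: A B local3_def mat3_def mat_of_rows_list_def scalar_prod_def eval_nat_numeral algebra_simps)
  show "a*f*h - b*d*e - b*e*h + b*h*k + c*g - d*e*f + d*f*k + e*k^2 - e^2*k - f*h = 0" by (rule trans[OF _ z[of 2 2]]) (simp add: A B local3_def mat3_def mat_of_rows_list_def scalar_prod_def eval_nat_numeral algebra_simps)
  show "- (c*d*e) - c*e*h + c*h - d*f^2 - e*f*k = 0" by (rule trans[OF _ z[of 2 3]]) (simp add: A B local3_def mat3_def mat_of_rows_list_def scalar_prod_def eval_nat_numeral algebra_simps)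
  show "- (a*e*g) - a*h^2 - d*f*g - d*h*k + e*g - g*k + h^2 = 0" by (rule trans[OF _ z[of 3 1]]) (simp add: A B local3_def mat3_def mat_of_rows_list_def scalar_prod_def eval_nat_numeral algebra_simps)
  show "- (b*e*g) - b*h^2 - e*f*g - e*h*k + f*g = 0" by (rule trans[OF _ z[of 3 2]]) (simp add: A B local3_def mat3_def mat_of_rows_list_def scalar_prod_def eval_nat_numeral algebra_simps)
  show "- (c*e*g) - c*h^2 - f*h*k - f^2*g + k - k^2 = 0" by (rule trans[OF _ z[of 3 3]]) (simp add: A B local3_def mat3_def mat_of_rows_list_def scalar_prod_def eval_nat_numeral algebra_simps)
qed

lemma rel_ts:
  assumes eq: "local3 4 1 B * local3 4 1 A = local3 4 1 A * local3 4 1 B"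
    and A: "A = mat3 a b c d e f g h k" and B: "B = mat3 x11 x12 x13 x21 x22 x23 x31 x32 x33"
  shows "- (b*x21) - c*x31 + d*x12 + g*x13 = 0"
    "- (a*x12) + b*x11 - b*x22 - c*x32 + e*x12 + h*x13 = 0"
    "- (a*x13) - b*x23 + c*x11 - c*x33 + f*x12 + k*x13 = 0"
    "a*x21 - d*x11 + d*x22 - e*x21 - f*x31 + g*x23 = 0"
    "b*x21 - d*x12 - f*x32 + h*x23 = 0"
    "c*x21 - d*x13 - e*x23 + f*x22 - f*x33 + k*x23 = 0"
    "a*x31 + d*x32 - g*x11 + g*x33 - h*x21 - k*x31 = 0"
    "b*x31 + e*x32 - g*x12 - h*x22 + h*x33 - k*x32 = 0"
    "c*x31 + f*x32 - g*x13 - h*x23 = 0"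
proof -
  have z: "\<And>r s. (local3 4 1 B * local3 4 1 A) $$ (r,s) - (local3 4 1 A * local3 4 1 B) $$ (r,s) = 0" using eq by simp
  show "- (b*x21) - c*x31 + d*x12 + g*x13 = 0" by (rule trans[OF _ z[of 0 0]]) (simp add: A B local3_def mat3_def mat_of_rows_list_def scalar_prod_def eval_nat_numeral algebra_simps)
  show "- (a*x12) + b*x11 - b*x22 - c*x32 + e*x12 + h*x13 = 0" by (rule trans[OF _ z[of 0 1]]) (simp add: A B local3_def mat3_def mat_of_rows_list_def scalar_prod_def eval_nat_numeral algebra_simps)
  show "- (a*x13) - b*x23 + c*x11 - c*x33 + f*x12 + k*x13 = 0" by (rule trans[OF _ z[of 0 2]]) (simp add: A B local3_def mat3_def mat_of_rows_list_def scalar_prod_def eval_nat_numeral algebra_simps)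
  show "a*x21 - d*x11 + d*x22 - e*x21 - f*x31 + g*x23 = 0" by (rule trans[OF _ z[of 1 0]]) (simp add: A B local3_def mat3_def mat_of_rows_list_def scalar_prod_def eval_nat_numeral algebra_simps)
  show "b*x21 - d*x12 - f*x32 + h*x23 = 0" by (rule trans[OF _ z[of 1 1]]) (simp add: A B local3_def mat3_def mat_of_rows_list_def scalar_prod_def eval_nat_numeral algebra_simps)
  show "c*x21 - d*x13 - e*x23 + f*x22 - f*x33 + k*x23 = 0" by (rule trans[OF _ z[of 1 2]]) (simp add: A B local3_def mat3_def mat_of_rows_list_def scalar_prod_def eval_nat_numeral algebra_simps)
  show "a*x31 + d*x32 - g*x11 + g*x33 - h*x21 - k*x31 = 0" by (rule trans[OF _ z[of 2 0]]) (simp add: A B local3_def mat3_def mat_of_rows_list_def scalar_prod_def eval_nat_numeral algebra_simps)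
  show "b*x31 + e*x32 - g*x12 - h*x22 + h*x33 - k*x32 = 0" by (rule trans[OF _ z[of 2 1]]) (simp add: A B local3_def mat3_def mat_of_rows_list_def scalar_prod_def eval_nat_numeral algebra_simps)
  show "c*x31 + f*x32 - g*x13 - h*x23 = 0" by (rule trans[OF _ z[of 2 2]]) (simp add: A B local3_def mat3_def mat_of_rows_list_def scalar_prod_def eval_nat_numeral algebra_simps)
qed

lemma rel_sa:
  assumes eq: "local3 4 1 A * (local3 4 2 A * local3 4 1 B) = local3 4 2 B * (local3 4 1 A * local3 4 2 A)"
    and A: "A = mat3 a b c d e f g h k" and B: "B = mat3 x11 x12 x13 x21 x22 x23 x31 x32 x33"
  shows "- (a) + a*b*x21 + a*x11 + b^2*x31 + c*d*x21 + c*e*x31 = 0"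
    "- (a*b) + a*b*x22 + a*x12 + b^2*x32 - c*d + c*d*x22 + c*e*x32 = 0"
    "a*b*x23 + a*x13 - b^2 + b^2*x33 + c*d*x23 - c*e + c*e*x33 = 0"
    "a*e*x21 + b*e*x31 + d*f*x21 + e*f*x31 - g*x12 = 0"
    "- (a*e*x11) + a*e*x22 - a*h*x12 + b*e*x32 - d*f*x11 + d*f*x22 - d*k*x12 + d*x12 + e*f*x32 - g*x13 = 0"
    "a*e*x23 - b*e*x11 + b*e*x33 - b*h*x12 + d*f*x23 + d*x13 - e*f*x11 + e*f*x33 - e*k*x12 - h*x13 = 0"
    "c*e - c*e*x11 - c*h*x12 - f*k*x12 + f^2 - f^2*x11 - k*x13 = 0"
    "a*h*x21 + b*h*x31 + d*k*x21 - d*x21 + e*k*x31 + g*x11 - g*x22 = 0"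
    "- (a*e*x21) + b*h*x32 - d*f*x21 + e*k*x32 + g*x12 - g*x23 = 0"
    "a*h*x23 - b*e*x21 - b*h*x22 + b*h*x33 + d*k*x23 - e*f*x21 - e*k*x22 + e*k*x33 + g*x13 - h*x23 = 0"
    "- (c*e*x21) + c*h - c*h*x22 + f*k - f*k*x22 - f^2*x21 - k*x23 = 0"
    "- (d*x31) + g*x21 - g*x32 + h*x31 = 0"
    "- (a*e*x31) - a*h*x32 - d*f*x31 - d*k*x32 + g*x22 - g*x33 + h*x32 = 0"
    "- (b*e*x31) - b*h*x32 - e*f*x31 - e*k*x32 + g*x23 = 0"
    "- (c*e*x31) - c*h*x32 - f*k*x32 - f^2*x31 + k - k*x33 = 0"
proof -
  have z: "\<And>r s. (local3 4 1 A * (local3 4 2 A * local3 4 1 B)) $$ (r,s) - (local3 4 2 B * (local3 4 1 A * local3 4 2 A)) $$ (r,s) = 0" using eq by simp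
  show "- (a) + a*b*x21 + a*x11 + b^2*x31 + c*d*x21 + c*e*x31 = 0" by (rule trans[OF _ z[of 0 0]]) (simp add: A B local3_def mat3_def mat_of_rows_list_def scalar_prod_def eval_nat_numeral algebra_simps)
  show "- (a*b) + a*b*x22 + a*x12 + b^2*x32 - c*d + c*d*x22 + c*e*x32 = 0" by (rule trans[OF _ z[of 0 1]]) (simp add: A B local3_def mat3_def mat_of_rows_list_def scalar_prod_def eval_nat_numeral algebra_simps)
  show "a*b*x23 + a*x13 - b^2 + b^2*x33 + c*d*x23 - c*e + c*e*x33 = 0" by (rule trans[OF _ z[of 0 2]]) (simp add: A B local3_def mat3_def mat_of_rows_list_def scalar_prod_def eval_nat_numeral algebra_simps)
  show "a*e*x21 + b*e*x31 + d*f*x21 + e*f*x31 - g*x12 = 0" by (rule trans[OF _ z[of 1 0]]) (simp add: A B local3_def mat3_def mat_of_rows_list_def scalar_prod_def eval_nat_numeral algebra_simps)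
  show "- (a*e*x11) + a*e*x22 - a*h*x12 + b*e*x32 - d*f*x11 + d*f*x22 - d*k*x12 + d*x12 + e*f*x32 - g*x13 = 0" by (rule trans[OF _ z[of 1 1]]) (simp add: A B local3_def mat3_def mat_of_rows_list_def scalar_prod_def eval_nat_numeral algebra_simps)
  show "a*e*x23 - b*e*x11 + b*e*x33 - b*h*x12 + d*f*x23 + d*x13 - e*f*x11 + e*f*x33 - e*k*x12 - h*x13 = 0" by (rule trans[OF _ z[of 1 2]]) (simp add: A B local3_def mat3_def mat_of_rows_list_def scalar_prod_def eval_nat_numeral algebra_simps)
  show "c*e - c*e*x11 - c*h*x12 - f*k*x12 + f^2 - f^2*x11 - k*x13 = 0" by (rule trans[OF _ z[of 1 3]]) (simp add: A B local3_def mat3_def mat_of_rows_list_def scalar_prod_def eval_nat_numeral algebra_simps)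
  show "a*h*x21 + b*h*x31 + d*k*x21 - d*x21 + e*k*x31 + g*x11 - g*x22 = 0" by (rule trans[OF _ z[of 2 0]]) (simp add: A B local3_def mat3_def mat_of_rows_list_def scalar_prod_def eval_nat_numeral algebra_simps)
  show "- (a*e*x21) + b*h*x32 - d*f*x21 + e*k*x32 + g*x12 - g*x23 = 0" by (rule trans[OF _ z[of 2 1]]) (simp add: A B local3_def mat3_def mat_of_rows_list_def scalar_prod_def eval_nat_numeral algebra_simps)
  show "a*h*x23 - b*e*x21 - b*h*x22 + b*h*x33 + d*k*x23 - e*f*x21 - e*k*x22 + e*k*x33 + g*x13 - h*x23 = 0" by (rule trans[OF _ z[of 2 2]]) (simp add: A B local3_def mat3_def mat_of_rows_list_def scalar_prod_def eval_nat_numeral algebra_simps)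
  show "- (c*e*x21) + c*h - c*h*x22 + f*k - f*k*x22 - f^2*x21 - k*x23 = 0" by (rule trans[OF _ z[of 2 3]]) (simp add: A B local3_def mat3_def mat_of_rows_list_def scalar_prod_def eval_nat_numeral algebra_simps)
  show "- (d*x31) + g*x21 - g*x32 + h*x31 = 0" by (rule trans[OF _ z[of 3 0]]) (simp add: A B local3_def mat3_def mat_of_rows_list_def scalar_prod_def eval_nat_numeral algebra_simps)
  show "- (a*e*x31) - a*h*x32 - d*f*x31 - d*k*x32 + g*x22 - g*x33 + h*x32 = 0" by (rule trans[OF _ z[of 3 1]]) (simp add: A B local3_def mat3_def mat_of_rows_list_def scalar_prod_def eval_nat_numeral algebra_simps)
  show "- (b*e*x31) - b*h*x32 - e*f*x31 - e*k*x32 + g*x23 = 0" by (rule trans[OF _ z[of 3 2]]) (simp add: A B local3_def mat3_def mat_of_rows_list_def scalar_prod_def eval_nat_numeral algebra_simps)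
  show "- (c*e*x31) - c*h*x32 - f*k*x32 - f^2*x31 + k - k*x33 = 0" by (rule trans[OF _ z[of 3 3]]) (simp add: A B local3_def mat3_def mat_of_rows_list_def scalar_prod_def eval_nat_numeral algebra_simps)
qed

lemma rel_sb:
  assumes eq: "local3 4 2 A * (local3 4 1 A * local3 4 2 B) = local3 4 1 B * (local3 4 2 A * local3 4 1 A)"
    and A: "A = mat3 a b c d e f g h k" and B: "B = mat3 x11 x12 x13 x21 x22 x23 x31 x32 x33"
  shows "a - a*d*x12 - a*x11 - b*g*x12 - d^2*x13 - e*g*x13 = 0"
    "- (a*e*x12) - b*h*x12 + c*x21 - d*e*x13 - e*h*x13 = 0"
    "- (a*f*x12) - b*k*x12 + b*x12 - c*x11 + c*x22 - d*f*x13 - e*k*x13 = 0"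
    "b*x13 - c*x12 + c*x23 - f*x13 = 0"
    "a*d - a*d*x22 - a*x21 + b*g - b*g*x22 - d^2*x23 - e*g*x23 = 0"
    "a*e*x11 - a*e*x22 + a*f*x21 + b*h*x11 - b*h*x22 + b*k*x21 - b*x21 + c*x31 - d*e*x23 - e*h*x23 = 0"
    "a*e*x12 + b*h*x12 - c*x21 + c*x32 - d*f*x23 - e*k*x23 = 0"
    "a*e*x13 + a*f*x23 + b*h*x13 + b*k*x23 - c*x22 + c*x33 - f*x23 = 0"
    "- (a*d*x32) - a*x31 - b*g*x32 + d^2 - d^2*x33 + e*g - e*g*x33 = 0"
    "- (a*e*x32) - b*h*x32 - b*x31 + d*e*x11 - d*e*x33 + d*f*x21 + e*h*x11 - e*h*x33 + e*k*x21 + f*x31 = 0"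
    "- (a*f*x32) - b*k*x32 - c*x31 + d*e*x12 + d*f*x22 - d*f*x33 + e*h*x12 + e*k*x22 - e*k*x33 + f*x32 = 0"
    "- (c*x32) + d*e*x13 + d*f*x23 + e*h*x13 + e*k*x23 = 0"
    "- (e*g) + e*g*x11 + f*g*x21 + h*k*x21 - h^2 + h^2*x11 + k*x31 = 0"
    "e*g*x12 - f*g + f*g*x22 - h*k + h*k*x22 + h^2*x12 + k*x32 = 0"
    "e*g*x13 + f*g*x23 + h*k*x23 + h^2*x13 - k + k*x33 = 0"
proof -
  have z: "\<And>r s. (local3 4 2 A * (local3 4 1 A * local3 4 2 B)) $$ (r,s) - (local3 4 1 B * (local3 4 2 A * local3 4 1 A)) $$ (r,s) = 0" using eq by simp
  show "a - a*d*x12 - a*x11 - b*g*x12 - d^2*x13 - e*g*x13 = 0" by (rule trans[OF _ z[of 0 0]]) (simp add: A B local3_def mat3_def mat_of_rows_list_def scalar_prod_def eval_nat_numeral algebra_simps)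
  show "- (a*e*x12) - b*h*x12 + c*x21 - d*e*x13 - e*h*x13 = 0" by (rule trans[OF _ z[of 0 1]]) (simp add: A B local3_def mat3_def mat_of_rows_list_def scalar_prod_def eval_nat_numeral algebra_simps)
  show "- (a*f*x12) - b*k*x12 + b*x12 - c*x11 + c*x22 - d*f*x13 - e*k*x13 = 0" by (rule trans[OF _ z[of 0 2]]) (simp add: A B local3_def mat3_def mat_of_rows_list_def scalar_prod_def eval_nat_numeral algebra_simps)
  show "b*x13 - c*x12 + c*x23 - f*x13 = 0" by (rule trans[OF _ z[of 0 3]]) (simp add: A B local3_def mat3_def mat_of_rows_list_def scalar_prod_def eval_nat_numeral algebra_simps)
  show "a*d - a*d*x22 - a*x21 + b*g - b*g*x22 - d^2*x23 - e*g*x23 = 0" by (rule trans[OF _ z[of 1 0]]) (simp add: A B local3_def mat3_def mat_of_rows_list_def scalar_prod_def eval_nat_numeral algebra_simps)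
  show "a*e*x11 - a*e*x22 + a*f*x21 + b*h*x11 - b*h*x22 + b*k*x21 - b*x21 + c*x31 - d*e*x23 - e*h*x23 = 0" by (rule trans[OF _ z[of 1 1]]) (simp add: A B local3_def mat3_def mat_of_rows_list_def scalar_prod_def eval_nat_numeral algebra_simps)
  show "a*e*x12 + b*h*x12 - c*x21 + c*x32 - d*f*x23 - e*k*x23 = 0" by (rule trans[OF _ z[of 1 2]]) (simp add: A B local3_def mat3_def mat_of_rows_list_def scalar_prod_def eval_nat_numeral algebra_simps)
  show "a*e*x13 + a*f*x23 + b*h*x13 + b*k*x23 - c*x22 + c*x33 - f*x23 = 0" by (rule trans[OF _ z[of 1 3]]) (simp add: A B local3_def mat3_def mat_of_rows_list_def scalar_prod_def eval_nat_numeral algebra_simps)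
  show "- (a*d*x32) - a*x31 - b*g*x32 + d^2 - d^2*x33 + e*g - e*g*x33 = 0" by (rule trans[OF _ z[of 2 0]]) (simp add: A B local3_def mat3_def mat_of_rows_list_def scalar_prod_def eval_nat_numeral algebra_simps)
  show "- (a*e*x32) - b*h*x32 - b*x31 + d*e*x11 - d*e*x33 + d*f*x21 + e*h*x11 - e*h*x33 + e*k*x21 + f*x31 = 0" by (rule trans[OF _ z[of 2 1]]) (simp add: A B local3_def mat3_def mat_of_rows_list_def scalar_prod_def eval_nat_numeral algebra_simps)
  show "- (a*f*x32) - b*k*x32 - c*x31 + d*e*x12 + d*f*x22 - d*f*x33 + e*h*x12 + e*k*x22 - e*k*x33 + f*x32 = 0" by (rule trans[OF _ z[of 2 2]]) (simp add: A B local3_def mat3_def mat_of_rows_list_def scalar_prod_def eval_nat_numeral algebra_simps)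
  show "- (c*x32) + d*e*x13 + d*f*x23 + e*h*x13 + e*k*x23 = 0" by (rule trans[OF _ z[of 2 3]]) (simp add: A B local3_def mat3_def mat_of_rows_list_def scalar_prod_def eval_nat_numeral algebra_simps)
  show "- (e*g) + e*g*x11 + f*g*x21 + h*k*x21 - h^2 + h^2*x11 + k*x31 = 0" by (rule trans[OF _ z[of 3 1]]) (simp add: A B local3_def mat3_def mat_of_rows_list_def scalar_prod_def eval_nat_numeral algebra_simps)
  show "e*g*x12 - f*g + f*g*x22 - h*k + h*k*x22 + h^2*x12 + k*x32 = 0" by (rule trans[OF _ z[of 3 2]]) (simp add: A B local3_def mat3_def mat_of_rows_list_def scalar_prod_def eval_nat_numeral algebra_simps)
  show "e*g*x13 + f*g*x23 + h*k*x23 + h^2*x13 - k + k*x33 = 0" by (rule trans[OF _ z[of 3 3]]) (simp add: A B local3_def mat3_def mat_of_rows_list_def scalar_prod_def eval_nat_numeral algebra_simps)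
qed
lemma fam1b: assumes "m22 \<noteq> 1" "m23 \<noteq> 0" "m22 \<noteq> 0"
  shows "family 1 (mat3 1 0 0 0 m22 m23 0 ((1 - m22) / m23) 0)
     (mat3 1 0 0 0 (1 - m23 * n32) (- (m23^2 * n32) / (m22 - 1)) 0 n32 ((-1 + m22 + m23 * n32) / (m22 - 1)))"
  unfolding family_def
  apply (rule disjI1)
  apply (rule conjI, simp)
  apply (rule exI[of _ m22], rule exI[of _ m23], rule exI[of _ 0], rule exI[of _ n32])
  using assms by simp

lemma fam2b: assumes "m22 \<noteq> 1" "m12 \<noteq> 0" "m22 \<noteq> 0"
  shows "family 2 (mat3 0 m12 0 ((1 - m22) / m12) m22 0 0 0 1)
     (mat3 ((m12 * n21 + m22 - 1) / (m22 - 1)) (- (m12^2 * n21) / (m22 - 1)) 0 n21 (1 - m12 * n21) 0 0 0 1)"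
  unfolding family_def
  apply (rule disjI2, rule disjI1)
  apply (rule conjI, simp)
  apply (rule exI[of _ m22], rule exI[of _ m12], rule exI[of _ 0], rule exI[of _ n21])
  using assms by simp

lemma fam3: assumes "m22 * m32 \<noteq> 0"
  shows "family 3 (mat3 1 (- m22 / m32) 0 0 m22 0 0 m32 1)
     (mat3 1 n12 0 0 (1 - m32 * n12 + m32 * n12 / m22) 0 0 (- (m32^2 * n12) / m22) 1)"
  unfolding family_def
  apply (rule disjI2, rule disjI2, rule disjI1)
  apply (rule conjI, simp)
  apply (rule exI[of _ m22], rule exI[of _ m32], rule exI[of _ n12])
  using assms by simp

lemma fam4: assumes "m23 * m22 \<noteq> 0"
  shows "family 4 (mat3 1 0 0 (- m22 / m23) m22 m23 0 0 1)
     (mat3 1 0 0 n21 (1 - m23 * n21 + m23 * n21 / m22) (- (m23^2 * n21) / m22) 0 0 1)"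
  unfolding family_def
  apply (rule disjI2, rule disjI2, rule disjI2, rule disjI1)
  apply (rule conjI, simp)
  apply (rule exI[of _ m22], rule exI[of _ m23], rule exI[of _ n21])
  using assms by simp

lemma fam5b: assumes "m23 * m32 \<noteq> 0" "m32 * m23 \<noteq> 1"
  shows "family 5 (mat3 1 0 0 0 0 m23 0 m32 (1 - m23 * m32))
     (mat3 1 0 0 0 n22 (m23 - m23 * n22) 0 (m32 - m32 * n22) (m23 * m32 * (n22 - 1) + 1))"
  unfolding family_def
  apply (rule disjI2, rule disjI2, rule disjI2, rule disjI2, rule disjI1)
  apply (rule conjI, simp)
  apply (rule exI[of _ m23], rule exI[of _ m32], rule exI[of _ n22], rule exI[of _ 0])
  using assms by simp

lemma fam6b: assumes "m12 * m21 \<noteq> 0" "m12 * m21 \<noteq> 1"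
  shows "family 6 (mat3 (1 - m12 * m21) m12 0 m21 0 0 0 0 1)
     (mat3 (m12 * m21 * (n22 - 1) + 1) (m12 - m12 * n22) 0 (m21 - m21 * n22) n22 0 0 0 1)"
  unfolding family_def
  apply (rule disjI2, rule disjI2, rule disjI2, rule disjI2, rule disjI2, rule disjI1)
  apply (rule conjI, simp)
  apply (rule exI[of _ m12], rule exI[of _ m21], rule exI[of _ 0], rule exI[of _ 0], rule exI[of _ n22])
  using assms by simp

lemma fam7: assumes "m23 * m32 \<noteq> 0"
  shows "family 7 (mat3 1 0 0 0 0 m23 0 m32 0) (mat3 1 0 0 0 n22 n23 0 (m32 * n23 / m23) n22)"
  unfolding family_def
  apply (rule disjI2, rule disjI2, rule disjI2, rule disjI2, rule disjI2, rule disjI2, rule disjI1)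
  apply (rule conjI, simp)
  apply (rule exI[of _ m23], rule exI[of _ m32], rule exI[of _ n22], rule exI[of _ n23])
  using assms by simp

lemma fam8: assumes "m12 * m21 \<noteq> 0"
  shows "family 8 (mat3 0 m12 0 m21 0 0 0 0 1) (mat3 n11 n12 0 (m21 * n12 / m12) n11 0 0 0 1)"
  unfolding family_def
  apply (rule disjI2, rule disjI2, rule disjI2, rule disjI2, rule disjI2, rule disjI2, rule disjI2)
  apply (rule conjI, simp)
  apply (rule exI[of _ m12], rule exI[of _ m21], rule exI[of _ n11], rule exI[of _ n12])
  using assms by simp

lemma div_intro: "(c::complex) \<noteq> 0 \<Longrightarrow> a * c = b \<Longrightarrow> a = b / c"
  by (simp add: eq_divide_eq)

lemma zb: "(H::complex) = 0 \<Longrightarrow> G = q * H \<Longrightarrow> G = 0" by simp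
lemma zb2: "(H1::complex) = 0 \<Longrightarrow> H2 = 0 \<Longrightarrow> G = qa * H1 + qb * H2 \<Longrightarrow> G = 0" by simp
lemma solve1: "(H::complex) = 0 \<Longrightarrow> A - B = q * H \<Longrightarrow> B = A" by simp
lemma solve: "(c::complex) \<noteq> 0 \<Longrightarrow> H = 0 \<Longrightarrow> c * (A - B) = q * H \<Longrightarrow> B = A" by simp
lemma divI: "(c::complex) \<noteq> 0 \<Longrightarrow> H = 0 \<Longrightarrow> b - a * c = q * H \<Longrightarrow> a = b / c"
  by (simp add: eq_divide_eq)
lemma divI2: "(c::complex) \<noteq> 0 \<Longrightarrow> H1 = 0 \<Longrightarrow> H2 = 0 \<Longrightarrow> b - a * c = qa * H1 + qb * H2 \<Longrightarrow> a = b / c"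
  by (simp add: eq_divide_eq)
lemma divE: "(c::complex) \<noteq> 0 \<Longrightarrow> H = 0 \<Longrightarrow> b - a * c = q * H \<Longrightarrow> b / c = a"
  by (simp add: divide_eq_eq)

lemma classify:
  fixes a b c d e f g h k x11 x12 x13 x21 x22 x23 x31 x32 x33 :: complex
  assumes cm_0_2: "a*c - c = 0"
  and cm_0_3: "b*c = 0"
  and cm_0_4: "c^2 = 0"
  and cm_1_2: "a*f - f = 0"
  and cm_1_3: "b*f = 0"
  and cm_1_4: "c*f = 0"
  and cm_2_0: "- (a*g) + g = 0"
  and cm_2_1: "- (a*h) + h = 0"
  and cm_2_3: "- (b) + b*k = 0"
  and cm_2_4: "- (c) + c*k = 0"
  and cm_3_0: "- (d*g) = 0"
  and cm_3_1: "- (d*h) = 0"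
  and cm_3_2: "d - d*k = 0"
  and cm_4_0: "- (g^2) = 0"
  and cm_4_1: "- (g*h) = 0"
  and cm_4_2: "g - g*k = 0"
  and br_0_0: "- (a) + a*b*d + a^2 + b^2*g + c*d^2 + c*e*g = 0"
  and br_0_1: "a*b*e + b^2*h - c*d + c*d*e + c*e*h = 0"
  and br_0_2: "a*b*f + a*c - b^2 + b^2*k + c*d*f - c*e + c*e*k = 0"
  and br_1_0: "a*d*e + b*e*g - b*g + d^2*f + e*f*g = 0"
  and br_1_1: "- (a*b*h) - a*d*f + a*e^2 - a^2*e + b*d - b*d*k + b*e*h - c*g + d*e*f + e*f*h = 0"
  and br_1_2: "- (a*b*e) - b^2*h + c*d - c*h + d*f^2 + e*f*k = 0"
  and br_1_3: "- (a*c*e) - a*f^2 - b*c*h - b*f*k + c*e - c*k + f^2 = 0"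
  and br_2_0: "a*d*h + a*g + b*g*h - d^2 + d^2*k - e*g + e*g*k = 0"
  and br_2_1: "- (a*d*e) + b*g + b*h^2 - d^2*f + e*h*k - f*g = 0"
  and br_2_2: "a*f*h - b*d*e - b*e*h + b*h*k + c*g - d*e*f + d*f*k + e*k^2 - e^2*k - f*h = 0"
  and br_2_3: "- (c*d*e) - c*e*h + c*h - d*f^2 - e*f*k = 0"
  and br_3_1: "- (a*e*g) - a*h^2 - d*f*g - d*h*k + e*g - g*k + h^2 = 0"
  and br_3_2: "- (b*e*g) - b*h^2 - e*f*g - e*h*k + f*g = 0"
  and br_3_3: "- (c*e*g) - c*h^2 - f*h*k - f^2*g + k - k^2 = 0"
  and ts_0_0: "- (b*x21) - c*x31 + d*x12 + g*x13 = 0"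
  and ts_0_1: "- (a*x12) + b*x11 - b*x22 - c*x32 + e*x12 + h*x13 = 0"
  and ts_0_2: "- (a*x13) - b*x23 + c*x11 - c*x33 + f*x12 + k*x13 = 0"
  and ts_1_0: "a*x21 - d*x11 + d*x22 - e*x21 - f*x31 + g*x23 = 0"
  and ts_1_1: "b*x21 - d*x12 - f*x32 + h*x23 = 0"
  and ts_1_2: "c*x21 - d*x13 - e*x23 + f*x22 - f*x33 + k*x23 = 0"
  and ts_2_0: "a*x31 + d*x32 - g*x11 + g*x33 - h*x21 - k*x31 = 0"
  and ts_2_1: "b*x31 + e*x32 - g*x12 - h*x22 + h*x33 - k*x32 = 0"
  and ts_2_2: "c*x31 + f*x32 - g*x13 - h*x23 = 0"
  and sa_0_0: "- (a) + a*b*x21 + a*x11 + b^2*x31 + c*d*x21 + c*e*x31 = 0"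
  and sa_0_1: "- (a*b) + a*b*x22 + a*x12 + b^2*x32 - c*d + c*d*x22 + c*e*x32 = 0"
  and sa_0_2: "a*b*x23 + a*x13 - b^2 + b^2*x33 + c*d*x23 - c*e + c*e*x33 = 0"
  and sa_1_0: "a*e*x21 + b*e*x31 + d*f*x21 + e*f*x31 - g*x12 = 0"
  and sa_1_1: "- (a*e*x11) + a*e*x22 - a*h*x12 + b*e*x32 - d*f*x11 + d*f*x22 - d*k*x12 + d*x12 + e*f*x32 - g*x13 = 0"
  and sa_1_2: "a*e*x23 - b*e*x11 + b*e*x33 - b*h*x12 + d*f*x23 + d*x13 - e*f*x11 + e*f*x33 - e*k*x12 - h*x13 = 0"
  and sa_1_3: "c*e - c*e*x11 - c*h*x12 - f*k*x12 + f^2 - f^2*x11 - k*x13 = 0"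
  and sa_2_0: "a*h*x21 + b*h*x31 + d*k*x21 - d*x21 + e*k*x31 + g*x11 - g*x22 = 0"
  and sa_2_1: "- (a*e*x21) + b*h*x32 - d*f*x21 + e*k*x32 + g*x12 - g*x23 = 0"
  and sa_2_2: "a*h*x23 - b*e*x21 - b*h*x22 + b*h*x33 + d*k*x23 - e*f*x21 - e*k*x22 + e*k*x33 + g*x13 - h*x23 = 0"
  and sa_2_3: "- (c*e*x21) + c*h - c*h*x22 + f*k - f*k*x22 - f^2*x21 - k*x23 = 0"
  and sa_3_0: "- (d*x31) + g*x21 - g*x32 + h*x31 = 0"
  and sa_3_1: "- (a*e*x31) - a*h*x32 - d*f*x31 - d*k*x32 + g*x22 - g*x33 + h*x32 = 0"
  and sa_3_2: "- (b*e*x31) - b*h*x32 - e*f*x31 - e*k*x32 + g*x23 = 0"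
  and sa_3_3: "- (c*e*x31) - c*h*x32 - f*k*x32 - f^2*x31 + k - k*x33 = 0"
  and sb_0_0: "a - a*d*x12 - a*x11 - b*g*x12 - d^2*x13 - e*g*x13 = 0"
  and sb_0_1: "- (a*e*x12) - b*h*x12 + c*x21 - d*e*x13 - e*h*x13 = 0"
  and sb_0_2: "- (a*f*x12) - b*k*x12 + b*x12 - c*x11 + c*x22 - d*f*x13 - e*k*x13 = 0"
  and sb_0_3: "b*x13 - c*x12 + c*x23 - f*x13 = 0"
  and sb_1_0: "a*d - a*d*x22 - a*x21 + b*g - b*g*x22 - d^2*x23 - e*g*x23 = 0"
  and sb_1_1: "a*e*x11 - a*e*x22 + a*f*x21 + b*h*x11 - b*h*x22 + b*k*x21 - b*x21 + c*x31 - d*e*x23 - e*h*x23 = 0"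
  and sb_1_2: "a*e*x12 + b*h*x12 - c*x21 + c*x32 - d*f*x23 - e*k*x23 = 0"
  and sb_1_3: "a*e*x13 + a*f*x23 + b*h*x13 + b*k*x23 - c*x22 + c*x33 - f*x23 = 0"
  and sb_2_0: "- (a*d*x32) - a*x31 - b*g*x32 + d^2 - d^2*x33 + e*g - e*g*x33 = 0"
  and sb_2_1: "- (a*e*x32) - b*h*x32 - b*x31 + d*e*x11 - d*e*x33 + d*f*x21 + e*h*x11 - e*h*x33 + e*k*x21 + f*x31 = 0"
  and sb_2_2: "- (a*f*x32) - b*k*x32 - c*x31 + d*e*x12 + d*f*x22 - d*f*x33 + e*h*x12 + e*k*x22 - e*k*x33 + f*x32 = 0"
  and sb_2_3: "- (c*x32) + d*e*x13 + d*f*x23 + e*h*x13 + e*k*x23 = 0"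
  and sb_3_1: "- (e*g) + e*g*x11 + f*g*x21 + h*k*x21 - h^2 + h^2*x11 + k*x31 = 0"
  and sb_3_2: "e*g*x12 - f*g + f*g*x22 - h*k + h*k*x22 + h^2*x12 + k*x32 = 0"
  and sb_3_3: "e*g*x13 + f*g*x23 + h*k*x23 + h^2*x13 - k + k*x33 = 0"
  and row0: "a \<noteq> 0 \<or> b \<noteq> 0 \<or> c \<noteq> 0"
  and row1: "d \<noteq> 0 \<or> e \<noteq> 0 \<or> f \<noteq> 0"
  and row2: "g \<noteq> 0 \<or> h \<noteq> 0 \<or> k \<noteq> 0"
  and col0: "a \<noteq> 0 \<or> d \<noteq> 0 \<or> g \<noteq> 0"
  and col1: "b \<noteq> 0 \<or> e \<noteq> 0 \<or> h \<noteq> 0"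
  and col2: "c \<noteq> 0 \<or> f \<noteq> 0 \<or> k \<noteq> 0"
  and nt: "\<not> (a = 1 \<and> b = 0 \<and> c = 0 \<and> d = 0 \<and> e = 1 \<and> f = 0 \<and> g = 0 \<and> h = 0 \<and> k = 1)"
  shows "\<exists>j \<in> {1..8}. family j (mat3 a b c d e f g h k) (mat3 x11 x12 x13 x21 x22 x23 x31 x32 x33)"
proof -
  note AS = algebra_simps power2_eq_square
  have c0: "c = 0" using cm_0_4 by simp
  have g0: "g = 0" using cm_4_0 by simp
  have "f * (a - 1) = 0" by (rule zb[OF cm_1_2, where q=1]) (simp add: AS)
  hence fa: "f = 0 \<or> a = 1" by simp
  have "h * (a - 1) = 0" by (rule zb[OF cm_2_1, where q="-1"]) (simp add: AS)
  hence ha: "h = 0 \<or> a = 1" by simp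
  have "b * (k - 1) = 0" by (rule zb[OF cm_2_3, where q=1]) (simp add: AS)
  hence bk: "b = 0 \<or> k = 1" by simp
  have "d * (k - 1) = 0" by (rule zb[OF cm_3_2, where q="-1"]) (simp add: AS)
  hence dk: "d = 0 \<or> k = 1" by simp
  have bf: "b = 0 \<or> f = 0" using cm_1_3 by simp
  have dh: "d = 0 \<or> h = 0" using cm_3_1 by simp
  consider (A) "a \<noteq> 1" "k \<noteq> 1" | (B) "a \<noteq> 1" "k = 1" | (C) "a = 1" "k \<noteq> 1" | (D) "a = 1" "k = 1"
    by blast
  then show ?thesis
  proof cases
    case A
    then have f0: "f = 0" "h = 0" "b = 0" "d = 0" using fa ha bk dk by auto
    have "a * (a - 1) = 0" by (rule zb[OF br_0_0, where q=1]) (simp add: f0 c0 g0 AS)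
    hence "a = 0" using A by simp
    with row0 f0 c0 show ?thesis by simp
  next
    case B
    hence f0: "f = 0" "h = 0" using fa ha by auto
    note z = c0 g0 f0 B(2)
    have x13: "x13 = 0" by (rule solve1[OF sa_1_3, where q=1]) (simp add: z AS)
    have x23: "x23 = 0" by (rule solve1[OF sa_2_3, where q=1]) (simp add: z AS)
    have x31: "x31 = 0" by (rule solve1[OF sb_3_1, where q="-1"]) (simp add: z AS)
    have x32: "x32 = 0" by (rule solve1[OF sb_3_2, where q="-1"]) (simp add: z AS)
    have x33: "x33 = 1" by (rule solve1[OF sb_3_3, where q="-1"]) (simp add: z AS)
    have b1: "a * (a + b * d - 1) = 0" by (rule zb[OF br_0_0, where q=1]) (simp add: z AS)
    have b2: "a * b * e = 0" by (rule zb[OF br_0_1, where q=1]) (simp add: z AS)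
    have b5: "e * (b * d + e - 1) = 0" by (rule zb[OF br_2_2, where q="-1"]) (simp add: z AS)
    show ?thesis
    proof (cases "a = 0")
      case a0: True
      have bnz: "b \<noteq> 0" using row0 a0 c0 by auto
      have dnz: "d \<noteq> 0" using col0 a0 g0 by auto
      show ?thesis
      proof (cases "e = 0")
        case e0: True
        have x22: "x22 = x11" by (rule solve[OF bnz ts_0_1, where q=1]) (simp add: z a0 e0 AS)
        have x21: "x21 = d * x12 / b" by (rule divI[OF bnz ts_0_0, where q=1]) (simp add: z AS)
        have M: "mat3 a b c d e f g h k = mat3 0 b 0 d 0 0 0 0 1" using z a0 e0 by simp
        have N: "mat3 x11 x12 x13 x21 x22 x23 x31 x32 x33 = mat3 x11 x12 0 (d * x12 / b) x11 0 0 0 1"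
          using x13 x23 x31 x32 x33 x21 x22 by simp
        show ?thesis unfolding M N
          by (rule bexI[of _ 8]) (use fam8[of b d x11 x12] bnz dnz in auto)
      next
        case enz: False
        have he: "e = 1 - b * d" by (rule solve[OF enz b5, where q="-1"]) (simp add: AS)
        have e1: "e - 1 \<noteq> 0" using he bnz dnz by simp
        have x12: "x12 = b - b * x11" by (rule solve[OF enz sa_1_2, where q=1]) (simp add: z a0 x13 x33 AS)
        have x22: "x22 = 1 - b * x21" by (rule solve[OF enz sa_2_2, where q=1]) (simp add: z a0 x23 x33 AS)
        have x21: "x21 = d * (1 - x11)" by (rule solve[OF bnz ts_0_0, where q=1]) (simp add: z x12 AS)
        have x11: "x11 = (b * x21 + e - 1) / (e - 1)"
          by (rule div_intro[OF e1]) (simp add: x21 he AS)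
        have x12': "x12 = - (b^2 * x21) / (e - 1)"
          by (rule div_intro[OF e1]) (simp add: x21 x12 he AS)
        have d': "d = (1 - e) / b" by (rule div_intro[OF bnz]) (simp add: he AS)
        have M: "mat3 a b c d e f g h k = mat3 0 b 0 ((1 - e) / b) e 0 0 0 1"
          using z a0 d' by simp
        have N: "mat3 x11 x12 x13 x21 x22 x23 x31 x32 x33 =
           mat3 ((b * x21 + e - 1) / (e - 1)) (- (b^2 * x21) / (e - 1)) 0 x21 (1 - b * x21) 0 0 0 1"
          by (simp only: x11 x12' x13 x23 x31 x32 x33 x22)
        have "e \<noteq> 1" using e1 by simp
        then show ?thesis unfolding M N
          by (intro bexI[of _ 2]) (use fam2b[of e b x21] bnz enz in auto)
      qed
    next
      case anz: False
      have ha: "a = 1 - b * d" by (rule solve[OF anz b1, where q="-1"]) (simp add: AS)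
      have bd: "b * d \<noteq> 0"
      proof
        assume "b * d = 0" hence "a = 1" using ha by simp
        with B show False by simp
      qed
      hence bnz: "b \<noteq> 0" and dnz: "d \<noteq> 0" by auto
      have e0: "e = 0" using b2 anz bnz by simp
      have bd1: "b * d \<noteq> 1"
      proof
        assume "b * d = 1" hence "a = 0" using ha by simp
        with anz show False by simp
      qed
      have x12: "x12 = b - b * x22" by (rule solve[OF anz sa_0_1, where q="-1"]) (simp add: z x32 AS)
      have x21: "x21 = d - d * x22" by (rule solve[OF bnz ts_0_0, where q=1]) (simp add: z x12 AS)
      have x11: "x11 = b * d * (x22 - 1) + 1" by (rule solve[OF anz sa_0_0, where q="-1"]) (simp add: z x31 x21 AS)
      have M: "mat3 a b c d e f g h k = mat3 (1 - b * d) b 0 d 0 0 0 0 1"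
        using z e0 ha by simp
      have N: "mat3 x11 x12 x13 x21 x22 x23 x31 x32 x33 =
          mat3 (b * d * (x22 - 1) + 1) (b - b * x22) 0 (d - d * x22) x22 0 0 0 1"
        by (simp only: x11 x12 x13 x21 x23 x31 x32 x33)
      show ?thesis unfolding M N
        by (intro bexI[of _ 6]) (use fam6b[of b d x22] bd bd1 in auto)
    qed
  next
    case C
    hence f0: "b = 0" "d = 0" using bk dk by auto
    note z = c0 g0 f0 C(1)
    have x11: "x11 = 1" by (rule solve1[OF sa_0_0, where q="-1"]) (simp add: z AS)
    have x12: "x12 = 0" by (rule solve1[OF sa_0_1, where q="-1"]) (simp add: z AS)
    have x13: "x13 = 0" by (rule solve1[OF sa_0_2, where q="-1"]) (simp add: z AS)
    have x21: "x21 = 0" by (rule solve1[OF sb_1_0, where q=1]) (simp add: z AS)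
    have x31: "x31 = 0" by (rule solve1[OF sb_2_0, where q=1]) (simp add: z AS)
    have b1: "e * (e + f * h - 1) = 0" by (rule zb[OF br_1_1, where q=1]) (simp add: z AS)
    have b2: "e * f * k = 0" by (rule zb[OF br_1_2, where q=1]) (simp add: z AS)
    have b3: "e * h * k = 0" by (rule zb[OF br_2_1, where q=1]) (simp add: z AS)
    have b4: "e * k * (k - e) = 0" by (rule zb[OF br_2_2, where q=1]) (simp add: z AS)
    have b5: "k * (f * h + k - 1) = 0" by (rule zb[OF br_3_3, where q="-1"]) (simp add: z AS)
    show ?thesis
    proof (cases "e = 0")
      case e0: True
      have fnz: "f \<noteq> 0" using row1 e0 f0 by auto
      have hnz: "h \<noteq> 0" using col1 e0 f0 by auto
      show ?thesis
      proof (cases "k = 0")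
        case k0: True
        have x33: "x33 = x22" by (rule solve[OF fnz ts_1_2, where q=1]) (simp add: z e0 k0 AS)
        have x32: "x32 = h * x23 / f" by (rule divI[OF fnz ts_1_1, where q=1]) (simp add: z AS)
        have M: "mat3 a b c d e f g h k = mat3 1 0 0 0 0 f 0 h 0" using z e0 k0 by simp
        have N: "mat3 x11 x12 x13 x21 x22 x23 x31 x32 x33 = mat3 1 0 0 0 x22 x23 0 (h * x23 / f) x22"
          by (simp only: x11 x12 x13 x21 x31 x32 x33)
        show ?thesis unfolding M N
          by (intro bexI[of _ 7]) (use fam7[of f h x22 x23] fnz hnz in auto)
      next
        case knz: False
        have hk: "k = 1 - f * h" by (rule solve[OF knz b5, where q="-1"]) (simp add: AS)
        have fh1: "h * f \<noteq> 1"
        proof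
          assume "h * f = 1" hence "k = 0" using hk by (simp add: mult.commute)
          with knz show False by simp
        qed
        have x23: "x23 = f - f * x22" by (rule solve[OF knz sa_2_3, where q=1]) (simp add: z x21 AS)
        have x32: "x32 = h - h * x22" by (rule solve[OF knz sb_3_2, where q="-1"]) (simp add: z x12 AS)
        have x33: "x33 = f * h * (x22 - 1) + 1" by (rule solve[OF knz sa_3_3, where q=1]) (simp add: z x31 x32 AS)
        have M: "mat3 a b c d e f g h k = mat3 1 0 0 0 0 f 0 h (1 - f * h)" using z e0 hk by simp
        have N: "mat3 x11 x12 x13 x21 x22 x23 x31 x32 x33 =
            mat3 1 0 0 0 x22 (f - f * x22) 0 (h - h * x22) (f * h * (x22 - 1) + 1)"
          by (simp only: x11 x12 x13 x21 x23 x31 x32 x33)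
        show ?thesis unfolding M N
          by (intro bexI[of _ 5]) (use fam5b[of f h x22] fnz hnz fh1 in auto)
      qed
    next
      case enz: False
      have he: "e = 1 - f * h" by (rule solve[OF enz b1, where q="-1"]) (simp add: AS)
      have k0: "k = 0"
      proof (rule ccontr)
        assume knz: "k \<noteq> 0"
        hence "f = 0" "h = 0" using b2 b3 enz by auto
        hence "e = 1" using he by simp
        moreover have "k = e" using b4 enz knz by simp
        ultimately show False using C by simp
      qed
      have hnz: "h \<noteq> 0" using row2 g0 k0 by auto
      have fnz: "f \<noteq> 0" using col2 c0 k0 by auto
      have e1: "e - 1 \<noteq> 0" using he hnz fnz by simp
      have x22: "x22 = 1 - f * x32" by (rule solve[OF enz sa_1_1, where q="-1"]) (simp add: z x11 x12 x13 AS)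
      have x23: "x23 = f - f * x33" by (rule solve[OF enz sa_1_2, where q="-1"]) (simp add: z x11 x12 x13 k0 AS)
      have x23': "x23 = - (f^2 * x32) / (e - 1)"
        by (rule divI[OF e1 ts_1_1, where q=f]) (simp add: z he AS)
      have x33: "x33 = (-1 + e + f * x32) / (e - 1)"
        by (rule divI[OF e1 ts_1_1, where q="-1"]) (simp add: z he x23 AS)
      have h': "h = (1 - e) / f" by (rule div_intro[OF fnz]) (simp add: he AS)
      have M: "mat3 a b c d e f g h k = mat3 1 0 0 0 e f 0 ((1 - e) / f) 0" using z k0 h' by simp
      have N: "mat3 x11 x12 x13 x21 x22 x23 x31 x32 x33 =
         mat3 1 0 0 0 (1 - f * x32) (- (f^2 * x32) / (e - 1)) 0 x32 ((-1 + e + f * x32) / (e - 1))"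
        by (simp only: x11 x12 x13 x21 x31 x22 x23' x33)
      have "e \<noteq> 1" using e1 by simp
      then show ?thesis unfolding M N
        by (intro bexI[of _ 1]) (use fam1b[of e f x32] fnz enz in auto)
    qed
  next
    case D
    note z0 = c0 g0 D
    consider (D1) "b = 0" "d = 0" | (D2) "b = 0" "h = 0" | (D3) "f = 0" "d = 0" | (D4) "f = 0" "h = 0"
      using bf dh by blast
    then show ?thesis
    proof cases
      case D1
      note z = z0 D1
      have fh: "f * h = 0" by (rule zb[OF br_3_3, where q="-1"]) (simp add: z AS)
      have "e * (1 - e) = 0" by (rule zb[OF br_2_2, where q=1]) (simp add: z AS)
      hence "e = 0 \<or> e = 1" by auto
      then show ?thesis
      proof
        assume e0: "e = 0"
        have "f \<noteq> 0" using row1 e0 z by auto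
        moreover have "h \<noteq> 0" using col1 e0 z by auto
        ultimately show ?thesis using fh by simp
      next
        assume e1: "e = 1"
        have "f = 0" by (rule solve1[OF br_1_2, where q="-1"]) (simp add: z e1 AS)
        moreover have "h = 0" by (rule solve1[OF br_2_1, where q="-1"]) (simp add: z e1 AS)
        ultimately show ?thesis using nt z e1 by simp
      qed
    next
      case D2
      note z = z0 D2
      have "d * (e + d * f) = 0" by (rule zb[OF br_1_0, where q=1]) (simp add: z AS)
      moreover have "f * (e + d * f) = 0" by (rule zb[OF br_1_2, where q=1]) (simp add: z AS)
      moreover have "(e - 1) * (e + d * f) = 0" by (rule zb[OF br_1_1, where q=1]) (simp add: z AS)
      ultimately have he0: "e + d * f = 0" using nt z by auto
      have enz: "e \<noteq> 0" using col1 z by auto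
      have dnz: "d \<noteq> 0" and fnz: "f \<noteq> 0" using he0 enz by auto
      have he: "e = - (d * f)" by (rule solve1[OF he0, where q="-1"]) (simp add: AS)
      have x11: "x11 = 1" by (rule solve1[OF sa_0_0, where q="-1"]) (simp add: z AS)
      have x12: "x12 = 0" by (rule solve1[OF sa_0_1, where q="-1"]) (simp add: z AS)
      have x13: "x13 = 0" by (rule solve1[OF sa_0_2, where q="-1"]) (simp add: z AS)
      have x31: "x31 = 0" by (rule solve1[OF sb_3_1, where q="-1"]) (simp add: z AS)
      have x32: "x32 = 0" by (rule solve1[OF sb_3_2, where q="-1"]) (simp add: z AS)
      have x33: "x33 = 1" by (rule solve1[OF sb_3_3, where q="-1"]) (simp add: z AS)
      have q: "f * x21 / e = x22 - 1 + f * x21"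
        by (rule divE[OF enz ts_1_0, where q=f]) (simp add: z x11 x31 he AS)
      have x22: "x22 = 1 - f * x21 + f * x21 / e" unfolding q by (simp add: AS)
      have q2: "x23 = - (f^2 * x21) / e"
        by (rule divI2[OF enz sa_2_3 ts_1_0, where qa=e and qb="- (f^2)"]) (simp add: z x11 x31 he AS)
      have d': "d = - e / f" by (rule div_intro[OF fnz]) (simp add: he AS)
      have M: "mat3 a b c d e f g h k = mat3 1 0 0 (- e / f) e f 0 0 1" using z d' by simp
      have N: "mat3 x11 x12 x13 x21 x22 x23 x31 x32 x33 =
          mat3 1 0 0 x21 (1 - f * x21 + f * x21 / e) (- (f^2 * x21) / e) 0 0 1"
        by (simp only: x11 x12 x13 x31 x32 x33 x22 q2)
      show ?thesis unfolding M N
        by (intro bexI[of _ 4]) (use fam4[of f e x21] fnz enz in auto)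
    next
      case D3
      note z = z0 D3
      have "b * (e + b * h) = 0" by (rule zb[OF br_0_1, where q=1]) (simp add: z AS)
      moreover have "h * (e + b * h) = 0" by (rule zb[OF br_2_1, where q=1]) (simp add: z AS)
      moreover have "(e - 1) * (e + b * h) = 0" by (rule zb[OF br_1_1, where q=1]) (simp add: z AS)
      ultimately have he0: "e + b * h = 0" using nt z by auto
      have enz: "e \<noteq> 0" using row1 z by auto
      have bnz: "b \<noteq> 0" and hnz: "h \<noteq> 0" using he0 enz by auto
      have he: "e = - (b * h)" by (rule solve1[OF he0, where q="-1"]) (simp add: AS)
      have x11: "x11 = 1" by (rule solve1[OF sb_0_0, where q=1]) (simp add: z AS)
      have x21: "x21 = 0" by (rule solve1[OF sb_1_0, where q=1]) (simp add: z AS)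
      have x31: "x31 = 0" by (rule solve1[OF sb_2_0, where q=1]) (simp add: z AS)
      have x13: "x13 = 0" by (rule solve1[OF sa_1_3, where q=1]) (simp add: z AS)
      have x23: "x23 = 0" by (rule solve1[OF sa_2_3, where q=1]) (simp add: z AS)
      have x33: "x33 = 1" by (rule solve1[OF sa_3_3, where q=1]) (simp add: z x31 AS)
      have q: "h * x12 / e = x22 - 1 + h * x12"
        by (rule divE[OF enz ts_0_1, where q="-h"]) (simp add: z x11 x13 he AS)
      have x22: "x22 = 1 - h * x12 + h * x12 / e" unfolding q by (simp add: AS)
      have q2: "x32 = - (h^2 * x12) / e"
        by (rule divI2[OF enz sb_3_2 ts_0_1, where qa="-e" and qb="h^2"]) (simp add: z x11 x13 he AS)
      have b': "b = - e / h" by (rule div_intro[OF hnz]) (simp add: he AS)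
      have M: "mat3 a b c d e f g h k = mat3 1 (- e / h) 0 0 e 0 0 h 1" using z b' by simp
      have N: "mat3 x11 x12 x13 x21 x22 x23 x31 x32 x33 =
          mat3 1 x12 0 0 (1 - h * x12 + h * x12 / e) 0 0 (- (h^2 * x12) / e) 1"
        by (simp only: x11 x21 x13 x31 x23 x33 x22 q2)
      have "e * h \<noteq> 0" using enz hnz by simp
      then show ?thesis unfolding M N
        by (intro bexI[of _ 3]) (use fam3[of e h x12] in auto)
    next
      case D4
      note z = z0 D4
      have bd: "b * d = 0" by (rule zb[OF br_0_0, where q=1]) (simp add: z AS)
      have "e * (1 - e) = 0" by (rule zb2[OF br_2_2 bd, where qa=1 and qb=e]) (simp add: z AS)
      hence "e = 0 \<or> e = 1" by auto
      then show ?thesis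
      proof
        assume e0: "e = 0"
        have "d \<noteq> 0" using row1 e0 z by auto
        moreover have "b \<noteq> 0" using col1 e0 z by auto
        ultimately show ?thesis using bd by simp
      next
        assume e1: "e = 1"
        have "b = 0" by (rule solve1[OF br_0_1, where q="-1"]) (simp add: z e1 AS)
        moreover have "d = 0" by (rule solve1[OF br_1_0, where q="-1"]) (simp add: z e1 AS)
        ultimately show ?thesis using nt z e1 by simp
      qed
    qed
  qed
qed

lemma prod5: "A \<in> carrier_mat 5 5 \<Longrightarrow> B \<in> carrier_mat 5 5 \<Longrightarrow> A * B \<in> carrier_mat 5 5"
  by auto

lemma emb_eq_iff: "A \<in> carrier_mat 5 5 \<Longrightarrow> B \<in> carrier_mat 5 5 \<Longrightarrow> (emb n A = emb n B) = (A = B)"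
  using emb_inj by blast

lemma idx_lo[simp]: "1 \<le> i \<Longrightarrow> i \<le> n - 2 \<Longrightarrow> i \<in> idx n"
  by (simp add: idx_def)

lemma idx_hi[simp]: "1 \<le> i \<Longrightarrow> i \<le> n - 2 \<Longrightarrow> Suc i \<in> idx n"
  by (simp add: idx_def)

lemma sm_rels_lists:
  assumes "(u, v) \<in> sm_rels n"
  shows "u \<in> lists (gens_SM n) \<and> v \<in> lists (gens_SM n)"
  using assms by (auto simp: sm_rels_def braid_rels_def gens_SM_def gens_B_def)

lemma one_local3: "1\<^sub>m (Suc n) * local3 n i X * 1\<^sub>m (Suc n) = local3 n i X"
proof -
  have c: "local3 n i X \<in> carrier_mat (Suc n) (Suc n)" using local3_carrier[of n i X] by simp
  show ?thesis by (simp add: left_mult_one_mat[OF c] right_mult_one_mat[OF c])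
qed

lemma gens_SM_sub: "gens_SM n \<subseteq> gens_SB n"
  by (auto simp: gens_SB_def)

lemma gens_SM_cases: "g \<in> gens_SM n \<Longrightarrow> (\<exists>i. g = Sg i \<or> g = SgI i \<or> g = Tg i)"
  by (auto simp: gens_SM_def gens_B_def)

theorem theorem4p2:
  fixes n :: nat and \<nu> \<nu>' :: "gen list \<Rightarrow> complex mat" and M N :: "complex mat"
  assumes "n \<ge> 4"
    and nu_rep: "is_pres_rep (gens_B n) (braid_rels n) (n+1) \<nu>"
    and nu_GL: "\<forall>w \<in> lists (gens_B n). invertible_mat (\<nu> w)"
    and M: "M \<in> carrier_mat 3 3" "\<forall>i \<in> idx n. \<nu> [Sg i] = local3 n i M"
    and nontriv: "\<exists>i \<in> idx n. \<nu> [Sg i] \<noteq> 1\<^sub>m (n+1)"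
    and nu'_rep: "is_pres_rep (gens_SM n) (sm_rels n) (n+1) \<nu>'"
    and N: "N \<in> carrier_mat 3 3"
    and ext: "\<forall>i \<in> idx n. \<nu>' [Sg i] = \<nu> [Sg i] \<and> \<nu>' [Tg i] = local3 n i N"
  shows "(\<exists>j \<in> {1..8}. \<exists>Mj Nj. family j Mj Nj \<and> equiv_to_local n \<nu>' Mj Nj) \<and>
         ((\<forall>i \<in> idx n. invertible_mat (\<nu>' [Tg i])) \<longrightarrow>
            (\<exists>\<rho>. is_pres_rep (gens_SB n) (sb_rels n) (n+1) \<rho> \<and>
                  (\<forall>w \<in> lists (gens_SM n). \<rho> w = \<nu>' w)))"
proof -
  have n4: "4 \<le> n" using assms(1) by simp
  have car': "\<And>w. w \<in> lists (gens_SM n) \<Longrightarrow> \<nu>' w \<in> carrier_mat (n+1) (n+1)"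
    using nu'_rep unfolding is_pres_rep_def by auto
  have one': "\<nu>' [] = 1\<^sub>m (n+1)" using nu'_rep unfolding is_pres_rep_def by auto
  have mult': "\<And>u v. u \<in> lists (gens_SM n) \<Longrightarrow> v \<in> lists (gens_SM n) \<Longrightarrow> \<nu>' (u @ v) = \<nu>' u * \<nu>' v"
    using nu'_rep unfolding is_pres_rep_def by auto
  have rel': "\<And>u v. (u, v) \<in> sm_rels n \<Longrightarrow> \<nu>' u = \<nu>' v"
    using nu'_rep unfolding is_pres_rep_def by auto
  have i123: "1 \<in> idx n" "2 \<in> idx n" "3 \<in> idx n" using n4 by (auto simp: idx_def)
  have gS: "\<And>i. i \<in> idx n \<Longrightarrow> Sg i \<in> gens_SM n" by (auto simp: gens_SM_def gens_B_def)
  have gT: "\<And>i. i \<in> idx n \<Longrightarrow> Tg i \<in> gens_SM n" by (auto simp: gens_SM_def)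
  have S: "\<And>i. i \<in> idx n \<Longrightarrow> \<nu>' [Sg i] = local3 n i M" using ext M(2) by auto
  have T: "\<And>i. i \<in> idx n \<Longrightarrow> \<nu>' [Tg i] = local3 n i N" using ext by auto
  have m2: "\<nu>' [x, y] = \<nu>' [x] * \<nu>' [y]" if "x \<in> gens_SM n" "y \<in> gens_SM n" for x y
    using mult'[of "[x]" "[y]"] that by simp
  have m3: "\<nu>' [x, y, z] = \<nu>' [x] * (\<nu>' [y] * \<nu>' [z])"
    if "x \<in> gens_SM n" "y \<in> gens_SM n" "z \<in> gens_SM n" for x y z
    using mult'[of "[x]" "[y, z]"] m2[of y z] that by simp
  have R1: "([Sg 1, Sg 3], [Sg 3, Sg 1]) \<in> sm_rels n"
    using n4 by (simp add: sm_rels_def braid_rels_def idx_def; linarith)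
  have R2: "([Sg 1, Sg 2, Sg 1], [Sg 2, Sg 1, Sg 2]) \<in> sm_rels n"
    using n4 by (simp add: sm_rels_def braid_rels_def idx_def; linarith)
  have R3: "([Tg 1, Sg 1], [Sg 1, Tg 1]) \<in> sm_rels n"
    using n4 by (simp add: sm_rels_def braid_rels_def idx_def; linarith)
  have R4: "([Sg 1, Sg 2, Tg 1], [Tg 2, Sg 1, Sg 2]) \<in> sm_rels n"
    using n4 by (simp add: sm_rels_def braid_rels_def idx_def; linarith)
  have R5: "([Sg 2, Sg 1, Tg 2], [Tg 1, Sg 2, Sg 1]) \<in> sm_rels n"
    using n4 by (simp add: sm_rels_def braid_rels_def idx_def; linarith)
  have E1: "local3 n 1 M * local3 n 3 M = local3 n 3 M * local3 n 1 M"
    using rel'[OF R1] m2[OF gS gS, OF i123(1) i123(3)] m2[OF gS gS, OF i123(3) i123(1)] S i123 by simp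
  have E2: "local3 n 1 M * (local3 n 2 M * local3 n 1 M) = local3 n 2 M * (local3 n 1 M * local3 n 2 M)"
    using rel'[OF R2] m3[OF gS gS gS, OF i123(1) i123(2) i123(1)] m3[OF gS gS gS, OF i123(2) i123(1) i123(2)] S i123 by simp
  have E3: "local3 n 1 N * local3 n 1 M = local3 n 1 M * local3 n 1 N"
    using rel'[OF R3] m2[OF gT gS, OF i123(1) i123(1)] m2[OF gS gT, OF i123(1) i123(1)] S T i123 by simp
  have E4: "local3 n 1 M * (local3 n 2 M * local3 n 1 N) = local3 n 2 N * (local3 n 1 M * local3 n 2 M)"
    using rel'[OF R4] m3[OF gS gS gT, OF i123(1) i123(2) i123(1)] m3[OF gT gS gS, OF i123(2) i123(1) i123(2)] S T i123 by simp
  have E5: "local3 n 2 M * (local3 n 1 M * local3 n 2 N) = local3 n 1 N * (local3 n 2 M * local3 n 1 M)"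
    using rel'[OF R5] m3[OF gS gS gT, OF i123(2) i123(1) i123(2)] m3[OF gT gS gS, OF i123(1) i123(2) i123(1)] S T i123 by simp
  have L1: "local3 n 1 X = emb n (local3 4 1 X)" for X by (rule local3_emb[OF n4]) simp_all
  have L2: "local3 n 2 X = emb n (local3 4 2 X)" for X by (rule local3_emb[OF n4]) simp_all
  have L3: "local3 n 3 X = emb n (local3 4 3 X)" for X by (rule local3_emb[OF n4]) simp_all
  have C1: "local3 4 1 M * local3 4 3 M = local3 4 3 M * local3 4 1 M"
    using E1 unfolding L1 L3 by (simp add: emb_mult prod5 emb_eq_iff)
  have C2: "local3 4 1 M * (local3 4 2 M * local3 4 1 M) = local3 4 2 M * (local3 4 1 M * local3 4 2 M)"
    using E2 unfolding L1 L2 by (simp add: emb_mult prod5 emb_eq_iff)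
  have C3: "local3 4 1 N * local3 4 1 M = local3 4 1 M * local3 4 1 N"
    using E3 unfolding L1 by (simp add: emb_mult prod5 emb_eq_iff)
  have C4: "local3 4 1 M * (local3 4 2 M * local3 4 1 N) = local3 4 2 N * (local3 4 1 M * local3 4 2 M)"
    using E4 unfolding L1 L2 by (simp add: emb_mult prod5 emb_eq_iff)
  have C5: "local3 4 2 M * (local3 4 1 M * local3 4 2 N) = local3 4 1 N * (local3 4 2 M * local3 4 1 M)"
    using E5 unfolding L1 L2 by (simp add: emb_mult prod5 emb_eq_iff)
  note Meq = mat3_eq[OF M(1)]
  note Neq = mat3_eq[OF N]
  have inv1: "invertible_mat (local3 n 1 M)"
  proof -
    have "[Sg 1] \<in> lists (gens_B n)" using i123 by (auto simp: gens_B_def)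
    hence "invertible_mat (\<nu> [Sg 1])" using nu_GL by auto
    thus ?thesis using M(2) i123 by auto
  qed
  have n2: "2 \<le> n" using n4 by simp
  have row0: "M$$(0,0) \<noteq> 0 \<or> M$$(0,1) \<noteq> 0 \<or> M$$(0,2) \<noteq> 0" by (rule local3_row_nz[OF inv1 _ n2]) simp
  have row1: "M$$(1,0) \<noteq> 0 \<or> M$$(1,1) \<noteq> 0 \<or> M$$(1,2) \<noteq> 0" by (rule local3_row_nz[OF inv1 _ n2]) simp
  have row2: "M$$(2,0) \<noteq> 0 \<or> M$$(2,1) \<noteq> 0 \<or> M$$(2,2) \<noteq> 0" by (rule local3_row_nz[OF inv1 _ n2]) simp
  have col0: "M$$(0,0) \<noteq> 0 \<or> M$$(1,0) \<noteq> 0 \<or> M$$(2,0) \<noteq> 0" by (rule local3_col_nz[OF inv1 _ n2]) simp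
  have col1: "M$$(0,1) \<noteq> 0 \<or> M$$(1,1) \<noteq> 0 \<or> M$$(2,1) \<noteq> 0" by (rule local3_col_nz[OF inv1 _ n2]) simp
  have col2: "M$$(0,2) \<noteq> 0 \<or> M$$(1,2) \<noteq> 0 \<or> M$$(2,2) \<noteq> 0" by (rule local3_col_nz[OF inv1 _ n2]) simp
  have nt: "\<not> (M$$(0,0) = 1 \<and> M$$(0,1) = 0 \<and> M$$(0,2) = 0 \<and> M$$(1,0) = 0 \<and> M$$(1,1) = 1 \<and> M$$(1,2) = 0
      \<and> M$$(2,0) = 0 \<and> M$$(2,1) = 0 \<and> M$$(2,2) = 1)"
  proof
    assume h: "M$$(0,0) = 1 \<and> M$$(0,1) = 0 \<and> M$$(0,2) = 0 \<and> M$$(1,0) = 0 \<and> M$$(1,1) = 1 \<and> M$$(1,2) = 0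
      \<and> M$$(2,0) = 0 \<and> M$$(2,1) = 0 \<and> M$$(2,2) = 1"
    have "M = 1\<^sub>m 3" using Meq h mat3_one by simp
    moreover obtain i where "i \<in> idx n" "\<nu> [Sg i] \<noteq> 1\<^sub>m (n+1)" using nontriv by auto
    ultimately show False using M(2) local3_one by simp
  qed
  have cls: "\<exists>j\<in>{1..8}. family j M N"
    using classify[OF rel_cm[OF C1 Meq Neq] rel_br[OF C2 Meq Neq] rel_ts[OF C3 Meq Neq]
        rel_sa[OF C4 Meq Neq] rel_sb[OF C5 Meq Neq] row0 row1 row2 col0 col1 col2 nt]
    unfolding Meq[symmetric] Neq[symmetric] .
  have eqv: "equiv_to_local n \<nu>' M N"
    unfolding equiv_to_local_def
    by (rule exI[of _ "1\<^sub>m (n+1)"], rule exI[of _ "1\<^sub>m (n+1)"]) (auto simp: S T one_local3)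
  have part1: "\<exists>j \<in> {1..8}. \<exists>Mj Nj. family j Mj Nj \<and> equiv_to_local n \<nu>' Mj Nj"
    using cls eqv by blast
  have part2: "\<exists>\<rho>. is_pres_rep (gens_SB n) (sb_rels n) (n+1) \<rho> \<and> (\<forall>w \<in> lists (gens_SM n). \<rho> w = \<nu>' w)"
    if invT: "\<forall>i \<in> idx n. invertible_mat (\<nu>' [Tg i])"
  proof -
    define invm where "invm i = (SOME B. \<nu>' [Tg i] * B = 1\<^sub>m (n+1) \<and> B * \<nu>' [Tg i] = 1\<^sub>m (n+1)
        \<and> B \<in> carrier_mat (n+1) (n+1))" for i
    have invP: "\<nu>' [Tg i] * invm i = 1\<^sub>m (n+1) \<and> invm i * \<nu>' [Tg i] = 1\<^sub>m (n+1)
        \<and> invm i \<in> carrier_mat (n+1) (n+1)" if i: "i \<in> idx n" for i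
    proof -
      let ?A = "\<nu>' [Tg i]"
      have cA: "?A \<in> carrier_mat (n+1) (n+1)" using car' gT[OF i] by auto
      from invT i obtain B where i1: "inverts_mat ?A B" and i2: "inverts_mat B ?A"
        unfolding invertible_mat_def by blast
      have AB: "?A * B = 1\<^sub>m (n+1)" using i1 cA unfolding inverts_mat_def by simp
      have BA0: "B * ?A = 1\<^sub>m (dim_row B)" using i2 unfolding inverts_mat_def by simp
      have dB: "dim_col B = n + 1" "dim_row B = n + 1"
        using arg_cong[OF AB, of dim_col] arg_cong[OF BA0, of dim_col] cA by auto
      have BA: "B * ?A = 1\<^sub>m (n+1)" using BA0 dB by simp
      have cB: "B \<in> carrier_mat (n+1) (n+1)" by (rule carrier_matI[OF dB(2) dB(1)])
      have "?A * B = 1\<^sub>m (n+1) \<and> B * ?A = 1\<^sub>m (n+1) \<and> B \<in> carrier_mat (n+1) (n+1)"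
        using AB BA cB by (intro conjI)
      thus ?thesis unfolding invm_def by (rule someI)
    qed
    define img where "img g = (case g of TgI i \<Rightarrow> invm i | _ \<Rightarrow> \<nu>' [g])" for g
    define rho where "rho w = foldr (\<lambda>g acc. img g * acc) w (1\<^sub>m (n+1))" for w
    have rho_Nil: "rho [] = 1\<^sub>m (n+1)" by (simp add: rho_def)
    have rho_Cons: "rho (g # w) = img g * rho w" for g w by (simp add: rho_def)
    have img_car: "img g \<in> carrier_mat (n+1) (n+1)" if "g \<in> gens_SB n" for g
    proof -
      have "g \<in> gens_SM n \<or> (\<exists>i \<in> idx n. g = TgI i)" using that by (auto simp: gens_SB_def)
      thus ?thesis
      proof
        assume g: "g \<in> gens_SM n"
        then obtain i where "g = Sg i \<or> g = SgI i \<or> g = Tg i" using gens_SM_cases by blast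
        hence "img g = \<nu>' [g]" by (auto simp: img_def)
        thus ?thesis using car'[of "[g]"] g by simp
      next
        assume "\<exists>i \<in> idx n. g = TgI i"
        then obtain i where "i \<in> idx n" "g = TgI i" by blast
        thus ?thesis using invP by (simp add: img_def)
      qed
    qed
    have rho_car: "w \<in> lists (gens_SB n) \<Longrightarrow> rho w \<in> carrier_mat (n+1) (n+1)" for w
    proof (induction w)
      case Nil
      then show ?case by (simp add: rho_Nil)
    next
      case (Cons g w)
      hence g: "g \<in> gens_SB n" and w: "w \<in> lists (gens_SB n)" by auto
      have c1: "img g \<in> carrier_mat (n+1) (n+1)" by (rule img_car[OF g])
      have c2: "rho w \<in> carrier_mat (n+1) (n+1)" by (rule Cons.IH[OF w])
      show ?case unfolding rho_Cons by (rule mult_carrier_mat[OF c1 c2])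
    qed
    have rho_app: "u \<in> lists (gens_SB n) \<Longrightarrow> v \<in> lists (gens_SB n) \<Longrightarrow> rho (u @ v) = rho u * rho v" for u v
    proof (induction u)
      case Nil
      then show ?case using rho_car[of v] by (simp add: rho_Nil)
    next
      case (Cons g u)
      hence g: "g \<in> gens_SB n" and u: "u \<in> lists (gens_SB n)" by auto
      have IH: "rho (u @ v) = rho u * rho v" by (rule Cons.IH[OF u Cons.prems(2)])
      have "rho ((g # u) @ v) = img g * rho (u @ v)" by (simp only: append_Cons rho_Cons)
      also have "\<dots> = img g * (rho u * rho v)" by (simp only: IH)
      also have "\<dots> = (img g * rho u) * rho v"
        by (rule assoc_mult_mat[symmetric, OF img_car[OF g] rho_car[OF u] rho_car[OF Cons.prems(2)]])
      finally show ?case by (simp only: rho_Cons)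
    qed
    have rho_agree: "w \<in> lists (gens_SM n) \<Longrightarrow> rho w = \<nu>' w" for w
    proof (induction w)
      case Nil
      then show ?case by (simp add: rho_Nil one')
    next
      case (Cons g w)
      hence g: "g \<in> gens_SM n" and w: "w \<in> lists (gens_SM n)" by auto
      obtain i where "g = Sg i \<or> g = SgI i \<or> g = Tg i" using gens_SM_cases[OF g] by blast
      hence ig: "img g = \<nu>' [g]" by (auto simp: img_def)
      have IH: "rho w = \<nu>' w" by (rule Cons.IH[OF w])
      have "rho (g # w) = \<nu>' [g] * \<nu>' w" by (simp only: rho_Cons ig IH)
      also have "\<dots> = \<nu>' ([g] @ w)" using mult'[of "[g]" w] g w by simp
      finally show ?case by simp
    qed
    have SMsub: "w \<in> lists (gens_SM n) \<Longrightarrow> w \<in> lists (gens_SB n)" for w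
      using gens_SM_sub by (auto)
    have rels: "rho u = rho v" if uv: "(u, v) \<in> sb_rels n" for u v
    proof -
      consider (sm) "(u, v) \<in> sm_rels n" | (t1) i where "i \<in> idx n" "u = [Tg i, TgI i]" "v = []"
        | (t2) i where "i \<in> idx n" "u = [TgI i, Tg i]" "v = []"
        using uv unfolding sb_rels_def by blast
      then show ?thesis
      proof cases
        case sm
        then show ?thesis using sm_rels_lists[OF sm] rho_agree rel' by metis
      next
        case (t1 i)
        have "rho u = \<nu>' [Tg i] * (invm i * 1\<^sub>m (n+1))" using t1 by (simp add: rho_Cons rho_Nil img_def)
        also have "\<dots> = 1\<^sub>m (n+1)"
        proof -
          have P1: "\<nu>' [Tg i] * invm i = 1\<^sub>m (n+1)" and P3: "invm i \<in> carrier_mat (n+1) (n+1)"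
            using invP[OF t1(1)] by auto
          show ?thesis by (simp only: right_mult_one_mat[OF P3] P1)
        qed
        finally show ?thesis using t1 by (simp add: rho_Nil)
      next
        case (t2 i)
        have "rho u = invm i * (\<nu>' [Tg i] * 1\<^sub>m (n+1))" using t2 by (simp add: rho_Cons rho_Nil img_def)
        also have "\<dots> = 1\<^sub>m (n+1)"
        proof -
          have P2: "invm i * \<nu>' [Tg i] = 1\<^sub>m (n+1)" using invP[OF t2(1)] by auto
          have cT: "\<nu>' [Tg i] \<in> carrier_mat (n+1) (n+1)" using car'[of "[Tg i]"] gT[OF t2(1)] by auto
          show ?thesis by (simp only: right_mult_one_mat[OF cT] P2)
        qed
        finally show ?thesis using t2 by (simp add: rho_Nil)
      qed
    qed
    have "is_pres_rep (gens_SB n) (sb_rels n) (n+1) rho"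
      unfolding is_pres_rep_def using rho_car rho_Nil rho_app rels by auto
    moreover have "\<forall>w \<in> lists (gens_SM n). rho w = \<nu>' w" using rho_agree by auto
    ultimately show ?thesis by blast
  qed
  show ?thesis using part1 part2 by blast
qed

end
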